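(* Let $\mathcal U$ be an ultrafilter on a set $I$ and let $(M_i)_{i\in I}$ be a family of pointed metric spaces. Then $\mathcal F((M_i)_{\mathcal U})$ is linearly isometric to the closed linear span of $\{(\delta(x_i))_{\mathcal U}:(x_i)_{\mathcal U}\in (M_i)_{\mathcal U}\}$ in the Banach space ultraproduct $(\mathcal F(M_i))_{\mathcal U}$.
   Context: Ultraproduct of metric spaces: given a set $I$, an ultrafilter $\mathcal U$ on $I$ and metric spaces $(M_i,d_i)$ with distinguished points $0_i\in M_i$, let $\ell_\infty(M_i)=\{(x_i)_{i\in I}\in\prod_i M_i:\sup_i d_i(x_i,0_i)<\infty\}$ with pseudometric $d((x_i),(y_i))=\lim_{\mathcal U,i}d_i(x_i,y_i)$. The ultraproduct $(M_i)_{\mathcal U}$ is the metric quotient identifying points at distance $0$; classes written $(x_i)_{\mathcal U}$, base point $(0_i)_{\mathcal U}$. For Banach spaces (base point $0$) this is the usual Banach ultraproduct with norm $\|(x_i)_{\mathcal U}\|=\lim_{\mathcal U}\|x_i\|$. For a pointed metric space $M$, $\mathrm{Lip}_0(M)$ is the Banach space of real Lipschitz functions vanishing at the base point normed by the Lipschitz constant, $\delta(x)\in \mathrm{Lip}_0(M)^*$ is evaluation at $x$, and $\mathcal F(M)=\overline{\mathrm{span}}\{\delta(x):x\in M\}\subset\mathrm{Lip}_0(M)^*$ is the Lipschitz-free space. *)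

theory Defs
  imports "HOL-Analysis.Analysis"
begin

definition is_ultrafilter :: "'i filter \<Rightarrow> bool" where
  "is_ultrafilter U \<longleftrightarrow> U \<noteq> bot \<and>
     (\<forall>P. eventually P U \<or> eventually (\<lambda>i. \<not> P i) U)"

text \<open>Lip_0(M): real Lipschitz functions on M vanishing at the base point
  (represented as functions on the whole type that vanish outside M).\<close>
definition lip0 :: "'b set \<Rightarrow> ('b \<Rightarrow> 'b \<Rightarrow> real) \<Rightarrow> 'b \<Rightarrow> ('b \<Rightarrow> real) set" where
  "lip0 M d z = {f. f z = 0 \<and> (\<forall>x. x \<notin> M \<longrightarrow> f x = 0) \<and>
      (\<exists>L. \<forall>x\<in>M. \<forall>y\<in>M. \<bar>f x - f y\<bar> \<le> L * d x y)}"

definition lipconst :: "'b set \<Rightarrow> ('b \<Rightarrow> 'b \<Rightarrow> real) \<Rightarrow> ('b \<Rightarrow> real) \<Rightarrow> real" where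
  "lipconst M d f = Inf {L. 0 \<le> L \<and> (\<forall>x\<in>M. \<forall>y\<in>M. \<bar>f x - f y\<bar> \<le> L * d x y)}"

text \<open>Evaluation functional delta(x) in Lip_0(M)^*; functionals are represented
  as maps on functions that vanish off Lip_0(M).\<close>
definition fdelta :: "'b set \<Rightarrow> ('b \<Rightarrow> 'b \<Rightarrow> real) \<Rightarrow> 'b \<Rightarrow> 'b \<Rightarrow> (('b \<Rightarrow> real) \<Rightarrow> real)" where
  "fdelta M d z x = (\<lambda>f. if f \<in> lip0 M d z then f x else 0)"

definition dual_bound :: "'b set \<Rightarrow> ('b \<Rightarrow> 'b \<Rightarrow> real) \<Rightarrow> 'b \<Rightarrow> (('b \<Rightarrow> real) \<Rightarrow> real) \<Rightarrow> real \<Rightarrow> bool" where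
  "dual_bound M d z \<phi> e \<longleftrightarrow> (\<forall>f\<in>lip0 M d z. lipconst M d f \<le> 1 \<longrightarrow> \<bar>\<phi> f\<bar> \<le> e)"

definition dnorm :: "'b set \<Rightarrow> ('b \<Rightarrow> 'b \<Rightarrow> real) \<Rightarrow> 'b \<Rightarrow> (('b \<Rightarrow> real) \<Rightarrow> real) \<Rightarrow> real" where
  "dnorm M d z \<phi> = Inf {e. 0 \<le> e \<and> dual_bound M d z \<phi> e}"

definition fspan :: "'b set \<Rightarrow> ('b \<Rightarrow> 'b \<Rightarrow> real) \<Rightarrow> 'b \<Rightarrow> (('b \<Rightarrow> real) \<Rightarrow> real) set" where
  "fspan M d z = {\<psi>. \<exists>S c. finite S \<and> S \<subseteq> M \<and>
      \<psi> = (\<lambda>f. \<Sum>x\<in>S. c x * fdelta M d z x f)}"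

text \<open>Lipschitz-free space F(M): closure of the span in the dual norm.\<close>
definition free :: "'b set \<Rightarrow> ('b \<Rightarrow> 'b \<Rightarrow> real) \<Rightarrow> 'b \<Rightarrow> (('b \<Rightarrow> real) \<Rightarrow> real) set" where
  "free M d z = {\<phi>. (\<forall>f. f \<notin> lip0 M d z \<longrightarrow> \<phi> f = 0) \<and>
      (\<forall>e>0. \<exists>\<psi>\<in>fspan M d z. dual_bound M d z (\<lambda>f. \<phi> f - \<psi> f) e)}"

definition linfM :: "('i \<Rightarrow> 'a set) \<Rightarrow> ('i \<Rightarrow> 'a \<Rightarrow> 'a \<Rightarrow> real) \<Rightarrow> ('i \<Rightarrow> 'a) \<Rightarrow> ('i \<Rightarrow> 'a) set" where
  "linfM M d z = {x. (\<forall>i. x i \<in> M i) \<and> (\<exists>B. \<forall>i. d i (x i) (z i) \<le> B)}"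

definition updist :: "'i filter \<Rightarrow> ('i \<Rightarrow> 'a \<Rightarrow> 'a \<Rightarrow> real) \<Rightarrow> ('i \<Rightarrow> 'a) \<Rightarrow> ('i \<Rightarrow> 'a) \<Rightarrow> real" where
  "updist U d x y = Lim U (\<lambda>i. d i (x i) (y i))"

definition upclass :: "'i filter \<Rightarrow> ('i \<Rightarrow> 'a set) \<Rightarrow> ('i \<Rightarrow> 'a \<Rightarrow> 'a \<Rightarrow> real) \<Rightarrow> ('i \<Rightarrow> 'a) \<Rightarrow> ('i \<Rightarrow> 'a) \<Rightarrow> ('i \<Rightarrow> 'a) set" where
  "upclass U M d z x = {y \<in> linfM M d z. updist U d x y = 0}"

definition uprod :: "'i filter \<Rightarrow> ('i \<Rightarrow> 'a set) \<Rightarrow> ('i \<Rightarrow> 'a \<Rightarrow> 'a \<Rightarrow> real) \<Rightarrow> ('i \<Rightarrow> 'a) \<Rightarrow> ('i \<Rightarrow> 'a) set set" where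
  "uprod U M d z = upclass U M d z ` linfM M d z"

definition uprod_dist :: "'i filter \<Rightarrow> ('i \<Rightarrow> 'a \<Rightarrow> 'a \<Rightarrow> real) \<Rightarrow> ('i \<Rightarrow> 'a) set \<Rightarrow> ('i \<Rightarrow> 'a) set \<Rightarrow> real" where
  "uprod_dist U d A B = updist U d (SOME x. x \<in> A) (SOME y. y \<in> B)"

definition uprod_base :: "'i filter \<Rightarrow> ('i \<Rightarrow> 'a set) \<Rightarrow> ('i \<Rightarrow> 'a \<Rightarrow> 'a \<Rightarrow> real) \<Rightarrow> ('i \<Rightarrow> 'a) \<Rightarrow> ('i \<Rightarrow> 'a) set" where
  "uprod_base U M d z = upclass U M d z z"

section \<open>Banach ultraproduct (F(M_i))_U, via representatives\<close>

definition linfF :: "('i \<Rightarrow> 'a set) \<Rightarrow> ('i \<Rightarrow> 'a \<Rightarrow> 'a \<Rightarrow> real) \<Rightarrow> ('i \<Rightarrow> 'a)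
    \<Rightarrow> ('i \<Rightarrow> ('a \<Rightarrow> real) \<Rightarrow> real) set" where
  "linfF M d z = {\<Phi>. (\<forall>i. \<Phi> i \<in> free (M i) (d i) (z i)) \<and>
      (\<exists>B. \<forall>i. dnorm (M i) (d i) (z i) (\<Phi> i) \<le> B)}"

text \<open>Ultraproduct seminorm; its zero set is the kernel of the quotient map.\<close>
definition unorm :: "'i filter \<Rightarrow> ('i \<Rightarrow> 'a set) \<Rightarrow> ('i \<Rightarrow> 'a \<Rightarrow> 'a \<Rightarrow> real) \<Rightarrow> ('i \<Rightarrow> 'a)
    \<Rightarrow> ('i \<Rightarrow> ('a \<Rightarrow> real) \<Rightarrow> real) \<Rightarrow> real" where
  "unorm U M d z \<Phi> = Lim U (\<lambda>i. dnorm (M i) (d i) (z i) (\<Phi> i))"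

definition udelta :: "('i \<Rightarrow> 'a set) \<Rightarrow> ('i \<Rightarrow> 'a \<Rightarrow> 'a \<Rightarrow> real) \<Rightarrow> ('i \<Rightarrow> 'a) \<Rightarrow> ('i \<Rightarrow> 'a)
    \<Rightarrow> ('i \<Rightarrow> ('a \<Rightarrow> real) \<Rightarrow> real)" where
  "udelta M d z x = (\<lambda>i. fdelta (M i) (d i) (z i) (x i))"

text \<open>Representatives of elements of the closed linear span of
  {(delta(x_i))_U : (x_i)_U in (M_i)_U} in (F(M_i))_U.\<close>
definition udelta_span_closure :: "'i filter \<Rightarrow> ('i \<Rightarrow> 'a set) \<Rightarrow> ('i \<Rightarrow> 'a \<Rightarrow> 'a \<Rightarrow> real) \<Rightarrow> ('i \<Rightarrow> 'a)
    \<Rightarrow> ('i \<Rightarrow> ('a \<Rightarrow> real) \<Rightarrow> real) set" where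
  "udelta_span_closure U M d z = {\<Phi> \<in> linfF M d z. \<forall>e>0. \<exists>S c.
      finite S \<and> S \<subseteq> linfM M d z \<and>
      unorm U M d z (\<lambda>i f. \<Phi> i f - (\<Sum>x\<in>S. c x * udelta M d z x i f)) \<le> e}"

end

theory Submission
  imports Defs
begin

definition ball1 :: "'b set \<Rightarrow> ('b \<Rightarrow> 'b \<Rightarrow> real) \<Rightarrow> 'b \<Rightarrow> ('b \<Rightarrow> real) set" where
  "ball1 M d z = {f. f z = 0 \<and> (\<forall>x. x \<notin> M \<longrightarrow> f x = 0) \<and> (\<forall>x\<in>M. \<forall>y\<in>M. \<bar>f x - f y\<bar> \<le> d x y)}"

lemma ball1_iff:
  assumes nn: "\<forall>x\<in>M. \<forall>y\<in>M. 0 \<le> d x y"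
  shows "(f \<in> lip0 M d z \<and> lipconst M d f \<le> 1) \<longleftrightarrow> f \<in> ball1 M d z"
proof
  assume "f \<in> ball1 M d z"
  then have b: "f z = 0" "\<forall>x. x \<notin> M \<longrightarrow> f x = 0" "\<forall>x\<in>M. \<forall>y\<in>M. \<bar>f x - f y\<bar> \<le> d x y"
    by (auto simp: ball1_def)
  then have "f \<in> lip0 M d z" unfolding lip0_def by (auto intro!: exI[of _ 1])
  moreover have "lipconst M d f \<le> 1" unfolding lipconst_def
    by (rule cInf_lower) (use b in \<open>auto intro!: bdd_belowI[of _ 0]\<close>)
  ultimately show "f \<in> lip0 M d z \<and> lipconst M d f \<le> 1" by simp
next
  assume a: "f \<in> lip0 M d z \<and> lipconst M d f \<le> 1"
  then obtain L where L: "\<forall>x\<in>M. \<forall>y\<in>M. \<bar>f x - f y\<bar> \<le> L * d x y" and f0: "f z = 0"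
    and fo: "\<forall>x. x \<notin> M \<longrightarrow> f x = 0" unfolding lip0_def by auto
  define S where "S = {L. 0 \<le> L \<and> (\<forall>x\<in>M. \<forall>y\<in>M. \<bar>f x - f y\<bar> \<le> L * d x y)}"
  have "max L 0 \<in> S" unfolding S_def
  proof (intro CollectI conjI ballI)
    fix x y assume "x \<in> M" "y \<in> M"
    then show "\<bar>f x - f y\<bar> \<le> max L 0 * d x y"
      using L nn by (meson max.cobounded1 mult_right_mono order_trans)
  qed simp
  then have Sne: "S \<noteq> {}" by auto
  have Sinf: "Inf S \<le> 1" using a unfolding lipconst_def S_def by simp
  have "\<bar>f x - f y\<bar> \<le> d x y" if xy: "x \<in> M" "y \<in> M" for x y
  proof (rule field_le_epsilon)
    fix e :: real assume e: "0 < e"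
    have dn: "0 \<le> d x y" using nn xy by auto
    have "Inf S < 1 + e / (d x y + 1)" using Sinf e dn by (smt (verit) divide_pos_pos)
    then obtain L' where L': "L' \<in> S" "L' < 1 + e / (d x y + 1)"
      using Sne by (meson cInf_lessD)
    then have "\<bar>f x - f y\<bar> \<le> L' * d x y" using xy unfolding S_def by auto
    also have "\<dots> \<le> (1 + e / (d x y + 1)) * d x y" using L' dn by (simp add: mult_right_mono)
    also have "\<dots> = d x y + e * (d x y / (d x y + 1))" by (simp add: algebra_simps)
    also have "\<dots> \<le> d x y + e * 1" using dn e by (intro add_left_mono mult_left_mono) auto
    finally show "\<bar>f x - f y\<bar> \<le> d x y + e" by simp
  qed
  then show "f \<in> ball1 M d z" using f0 fo by (auto simp: ball1_def)
qed

locale nnsp =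
  fixes M :: "'b set" and d :: "'b \<Rightarrow> 'b \<Rightarrow> real" and z :: 'b
  assumes nn: "\<forall>x\<in>M. \<forall>y\<in>M. 0 \<le> d x y"
begin

lemma db_iff: "dual_bound M d z \<phi> e \<longleftrightarrow> (\<forall>f\<in>ball1 M d z. \<bar>\<phi> f\<bar> \<le> e)"
  unfolding dual_bound_def using ball1_iff[OF nn] by blast

lemma zero_ball: "(\<lambda>_. 0) \<in> ball1 M d z"
  using nn by (auto simp: ball1_def)

lemma db_nonneg: "dual_bound M d z \<phi> e \<Longrightarrow> 0 \<le> e"
  using zero_ball db_iff by fastforce

lemma dn_le: "dual_bound M d z \<phi> e \<Longrightarrow> dnorm M d z \<phi> \<le> e"
  unfolding dnorm_def
  by (rule cInf_lower) (auto intro: db_nonneg intro!: bdd_belowI[of _ 0])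

lemma dn_db: assumes "dual_bound M d z \<phi> e" shows "dual_bound M d z \<phi> (dnorm M d z \<phi>)"
  unfolding db_iff
proof
  fix f assume f: "f \<in> ball1 M d z"
  show "\<bar>\<phi> f\<bar> \<le> dnorm M d z \<phi>" unfolding dnorm_def
    by (rule cInf_greatest) (use assms db_nonneg f db_iff in auto)
qed

lemma dn_nonneg: "dual_bound M d z \<phi> e \<Longrightarrow> 0 \<le> dnorm M d z \<phi>"
  using dn_db db_nonneg by blast

lemma dn_ge: "dual_bound M d z \<phi> e \<Longrightarrow> f \<in> ball1 M d z \<Longrightarrow> \<bar>\<phi> f\<bar> \<le> dnorm M d z \<phi>"
  using dn_db db_iff by blast

lemma db_mono: "dual_bound M d z \<phi> e \<Longrightarrow> e \<le> e' \<Longrightarrow> dual_bound M d z \<phi> e'"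
  unfolding db_iff by force

lemma db_le_dn: "dual_bound M d z \<phi> e \<Longrightarrow> dnorm M d z \<phi> \<le> e' \<Longrightarrow> dual_bound M d z \<phi> e'"
  using dn_db db_mono by blast

lemma dn_approx:
  assumes "dual_bound M d z \<phi> e" "0 < \<epsilon>"
  shows "\<exists>f\<in>ball1 M d z. dnorm M d z \<phi> - \<epsilon> < \<bar>\<phi> f\<bar>"
proof (rule ccontr)
  assume "\<not> ?thesis"
  then have h: "\<forall>f\<in>ball1 M d z. \<bar>\<phi> f\<bar> \<le> dnorm M d z \<phi> - \<epsilon>" by force
  then have "dual_bound M d z \<phi> (dnorm M d z \<phi> - \<epsilon>)" using db_iff by blast
  then have "dnorm M d z \<phi> \<le> dnorm M d z \<phi> - \<epsilon>" by (rule dn_le)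
  then show False using assms by simp
qed

lemma db_pw:
  assumes "dual_bound M d z a e1" "dual_bound M d z b e2"
    "\<forall>f\<in>ball1 M d z. \<bar>\<phi> f\<bar> \<le> \<bar>a f\<bar> + \<bar>b f\<bar>"
  shows "dual_bound M d z \<phi> (e1 + e2)"
  using assms unfolding db_iff by (meson add_mono order_trans)

lemma db_pw3:
  assumes "dual_bound M d z a e1" "dual_bound M d z b e2" "dual_bound M d z c e3"
    "\<forall>f\<in>ball1 M d z. \<bar>\<phi> f\<bar> \<le> \<bar>a f\<bar> + \<bar>b f\<bar> + \<bar>c f\<bar>"
  shows "dual_bound M d z \<phi> (e1 + e2 + e3)"
  using assms unfolding db_iff by (meson add_mono order_trans)

lemma db_pw1:
  assumes "dual_bound M d z a e" "\<forall>f\<in>ball1 M d z. \<bar>\<phi> f\<bar> \<le> \<bar>a f\<bar>"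
  shows "dual_bound M d z \<phi> e"
  using assms unfolding db_iff by (meson order_trans)

lemma db_scale:
  assumes "dual_bound M d z a e" "\<forall>f\<in>ball1 M d z. \<bar>\<phi> f\<bar> \<le> \<bar>c\<bar> * \<bar>a f\<bar>"
  shows "dual_bound M d z \<phi> (\<bar>c\<bar> * e)"
  using assms unfolding db_iff by (meson abs_ge_zero mult_left_mono order_trans)

lemma db_neg: "dual_bound M d z (\<lambda>f. a f - b f) e \<Longrightarrow> dual_bound M d z (\<lambda>f. b f - a f) e"
  by (erule db_pw1) auto

lemma dn_lip:
  assumes "dual_bound M d z a e" "dual_bound M d z (\<lambda>f. a f - b f) \<epsilon>"
  shows "\<bar>dnorm M d z a - dnorm M d z b\<bar> \<le> \<epsilon>"
proof -
  have ba: "dual_bound M d z b (dnorm M d z a + \<epsilon>)"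
    by (rule db_pw[OF dn_db[OF assms(1)] assms(2)]) auto
  have "dual_bound M d z a (dnorm M d z b + \<epsilon>)"
    by (rule db_pw[OF dn_db[OF ba] assms(2)]) auto
  then have 1: "dnorm M d z a \<le> dnorm M d z b + \<epsilon>" by (rule dn_le)
  have 2: "dnorm M d z b \<le> dnorm M d z a + \<epsilon>" using ba by (rule dn_le)
  show ?thesis using 1 2 by linarith
qed

end

lemma sum_ext:
  fixes c h :: "'a \<Rightarrow> real"
  assumes "finite K" "S \<subseteq> K"
  shows "(\<Sum>x\<in>S. c x * h x) = (\<Sum>x\<in>K. (if x \<in> S then c x else 0) * h x)"
proof -
  have "(\<Sum>x\<in>K. (if x \<in> S then c x else 0) * h x) = (\<Sum>x\<in>K. if x \<in> S then c x * h x else 0)"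
    by (rule sum.cong) auto
  also have "\<dots> = (\<Sum>x\<in>K \<inter> S. c x * h x)" by (simp add: sum.inter_restrict assms)
  also have "K \<inter> S = S" using assms by auto
  finally show ?thesis by simp
qed

lemma merge:
  fixes ca cb :: "'a \<Rightarrow> real" and a b :: real
  assumes "finite S1" "finite S2"
  shows "\<exists>S c. finite S \<and> S \<subseteq> S1 \<union> S2 \<and>
    (\<forall>h. (\<Sum>x\<in>S. c x * h x) = a * (\<Sum>x\<in>S1. ca x * h x) + b * (\<Sum>x\<in>S2. cb x * h x))"
proof (intro exI conjI allI)
  let ?K = "S1 \<union> S2"
  let ?c = "\<lambda>x. a * (if x \<in> S1 then ca x else 0) + b * (if x \<in> S2 then cb x else 0)"
  show "finite ?K" "?K \<subseteq> S1 \<union> S2" using assms by auto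
  fix h :: "'a \<Rightarrow> real"
  have "(\<Sum>x\<in>?K. ?c x * h x) = a * (\<Sum>x\<in>?K. (if x \<in> S1 then ca x else 0) * h x)
      + b * (\<Sum>x\<in>?K. (if x \<in> S2 then cb x else 0) * h x)"
    by (simp add: sum_distrib_left sum.distrib algebra_simps)
  also have "\<dots> = a * (\<Sum>x\<in>S1. ca x * h x) + b * (\<Sum>x\<in>S2. cb x * h x)"
    using sum_ext[of ?K S1 ca h] sum_ext[of ?K S2 cb h] assms by simp
  finally show "(\<Sum>x\<in>?K. ?c x * h x) = a * (\<Sum>x\<in>S1. ca x * h x) + b * (\<Sum>x\<in>S2. cb x * h x)" .
qed

lemma geo_cauchy:
  fixes a :: "nat \<Rightarrow> real"
  assumes h: "\<And>m. \<bar>a m - a (Suc m)\<bar> \<le> C * (1/2)^m"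
  shows "\<exists>l. a \<longlonglongrightarrow> l \<and> (\<forall>n. \<bar>l - a n\<bar> \<le> 2 * C * (1/2)^n)"
proof -
  have C: "0 \<le> C" using h[of 0] by auto
  have tel: "\<bar>a m - a n\<bar> \<le> 2 * C * ((1/2)^n - (1/2)^m)" if "n \<le> m" for m n
    using that
  proof (induction m rule: dec_induct)
    case base then show ?case by simp
  next
    case (step m)
    have "\<bar>a (Suc m) - a n\<bar> \<le> \<bar>a m - a n\<bar> + \<bar>a m - a (Suc m)\<bar>" by linarith
    also have "\<dots> \<le> 2 * C * ((1/2)^n - (1/2)^m) + C * (1/2)^m" using step h[of m] by linarith
    also have "\<dots> = 2 * C * ((1/2)^n - (1/2)^Suc m)" by (simp add: algebra_simps)
    finally show ?case .
  qed
  have tel2: "\<bar>a m - a n\<bar> \<le> 2 * C * (1/2)^n" if "n \<le> m" for m n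
  proof -
    have "2 * C * ((1/2)^n - (1/2)^m) \<le> 2 * C * (1/2)^n" using C by (simp add: mult_left_mono)
    then show ?thesis using tel[OF that] by linarith
  qed
  have "Cauchy a"
  proof (rule metric_CauchyI)
    fix e :: real assume e: "0 < e"
    obtain N where N: "(1/2::real)^N < e / (4 * C + 1)"
      using real_arch_pow_inv[of "e / (4 * C + 1)" "1/2"] e C by auto
    have "4 * C * (1/2)^N < e"
    proof -
      have "4 * C * (1/2::real)^N \<le> (4 * C + 1) * (1/2)^N" by (simp add: mult_right_mono)
      also have "\<dots> < (4 * C + 1) * (e / (4 * C + 1))" using N C by (intro mult_strict_left_mono) auto
      also have "\<dots> = e" using C by simp
      finally show ?thesis .
    qed
    show "\<exists>N. \<forall>m\<ge>N. \<forall>n\<ge>N. dist (a m) (a n) < e"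
    proof (intro exI allI impI)
      fix m n assume mn: "N \<le> m" "N \<le> n"
      have "\<bar>a m - a N\<bar> \<le> 2 * C * (1/2)^N" "\<bar>a n - a N\<bar> \<le> 2 * C * (1/2)^N"
        using tel2 mn by auto
      then show "dist (a m) (a n) < e" using \<open>4 * C * (1/2)^N < e\<close> by (simp add: dist_real_def)
    qed
  qed
  then obtain l where l: "a \<longlonglongrightarrow> l" using Cauchy_convergent_iff convergent_def by blast
  have "\<bar>l - a n\<bar> \<le> 2 * C * (1/2)^n" for n
  proof -
    have "(\<lambda>m. \<bar>a m - a n\<bar>) \<longlonglongrightarrow> \<bar>l - a n\<bar>" by (intro tendsto_intros l)
    moreover have "eventually (\<lambda>m. \<bar>a m - a n\<bar> \<le> 2 * C * (1/2)^n) sequentially"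
      using tel2 by (auto simp: eventually_sequentially)
    ultimately show ?thesis by (rule tendsto_upperbound) simp
  qed
  then show ?thesis using l by blast
qed

locale pnsp = nnsp +
  assumes zM: "z \<in> M"
begin

lemma ball1_lip0: "f \<in> ball1 M d z \<Longrightarrow> f \<in> lip0 M d z"
  using ball1_iff[OF nn] by blast

lemma ball1_le: "f \<in> ball1 M d z \<Longrightarrow> x \<in> M \<Longrightarrow> \<bar>f x\<bar> \<le> d x z"
proof -
  assume f: "f \<in> ball1 M d z" and x: "x \<in> M"
  have "\<bar>f x - f z\<bar> \<le> d x z" "f z = 0" using f x zM unfolding ball1_def by blast+
  then show ?thesis by simp
qed

lemma fspan_bdd:
  assumes "\<psi> \<in> fspan M d z" shows "\<exists>e. dual_bound M d z \<psi> e"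
proof -
  obtain S c where S: "finite S" "S \<subseteq> M" "\<psi> = (\<lambda>f. \<Sum>x\<in>S. c x * fdelta M d z x f)"
    using assms unfolding fspan_def by auto
  have "dual_bound M d z \<psi> (\<Sum>x\<in>S. \<bar>c x\<bar> * d x z)"
    unfolding db_iff
  proof
    fix f assume f: "f \<in> ball1 M d z"
    have "\<bar>\<psi> f\<bar> = \<bar>\<Sum>x\<in>S. c x * f x\<bar>" using S ball1_lip0[OF f] by (simp add: fdelta_def)
    also have "\<dots> \<le> (\<Sum>x\<in>S. \<bar>c x * f x\<bar>)" by (rule sum_abs)
    also have "\<dots> \<le> (\<Sum>x\<in>S. \<bar>c x\<bar> * d x z)"
    proof (rule sum_mono)
      fix x assume "x \<in> S"
      then have "x \<in> M" using S by auto
      then have "\<bar>f x\<bar> \<le> d x z" by (rule ball1_le[OF f])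
      then show "\<bar>c x * f x\<bar> \<le> \<bar>c x\<bar> * d x z" by (simp add: abs_mult mult_left_mono)
    qed
    finally show "\<bar>\<psi> f\<bar> \<le> (\<Sum>x\<in>S. \<bar>c x\<bar> * d x z)" .
  qed
  then show ?thesis by blast
qed

lemma free_bdd:
  assumes "\<phi> \<in> free M d z" shows "\<exists>e. dual_bound M d z \<phi> e"
proof -
  obtain \<psi> where p: "\<psi> \<in> fspan M d z" "dual_bound M d z (\<lambda>f. \<phi> f - \<psi> f) 1"
  proof -
    have "\<forall>e>0. \<exists>\<psi>\<in>fspan M d z. dual_bound M d z (\<lambda>f. \<phi> f - \<psi> f) e"
      using assms unfolding free_def by blast
    then show ?thesis using that zero_less_one by blast
  qed
  obtain e where e: "dual_bound M d z \<psi> e" using fspan_bdd p(1) by blast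
  have "dual_bound M d z \<phi> (1 + e)" by (rule db_pw[OF p(2) e]) auto
  then show ?thesis by blast
qed

lemma fspan_lin:
  assumes "\<psi>1 \<in> fspan M d z" "\<psi>2 \<in> fspan M d z"
  shows "(\<lambda>f. a * \<psi>1 f + b * \<psi>2 f) \<in> fspan M d z"
proof -
  obtain S1 c1 where S1: "finite S1" "S1 \<subseteq> M" "\<psi>1 = (\<lambda>f. \<Sum>x\<in>S1. c1 x * fdelta M d z x f)"
    using assms unfolding fspan_def by auto
  obtain S2 c2 where S2: "finite S2" "S2 \<subseteq> M" "\<psi>2 = (\<lambda>f. \<Sum>x\<in>S2. c2 x * fdelta M d z x f)"
    using assms unfolding fspan_def by auto
  obtain S c where S: "finite S" "S \<subseteq> S1 \<union> S2"
    "\<forall>h. (\<Sum>x\<in>S. c x * h x) = a * (\<Sum>x\<in>S1. c1 x * h x) + b * (\<Sum>x\<in>S2. c2 x * h x)"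
    using merge[OF S1(1) S2(1), where a=a and b=b and ca=c1 and cb=c2] by (elim exE conjE) blast
  have "(\<lambda>f. a * \<psi>1 f + b * \<psi>2 f) = (\<lambda>f. \<Sum>x\<in>S. c x * fdelta M d z x f)"
    using S(3) S1(3) S2(3) by (intro ext) simp
  moreover have "S \<subseteq> M" using S(2) S1(2) S2(2) by blast
  ultimately show ?thesis unfolding fspan_def using S(1) by blast
qed

lemma fspan_free: "\<psi> \<in> fspan M d z \<Longrightarrow> \<psi> \<in> free M d z"
  unfolding free_def
proof (intro CollectI conjI allI impI)
  fix f assume "\<psi> \<in> fspan M d z" "f \<notin> lip0 M d z"
  then show "\<psi> f = 0" unfolding fspan_def fdelta_def by auto
next
  fix e :: real assume "\<psi> \<in> fspan M d z" "0 < e"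
  then show "\<exists>\<psi>'\<in>fspan M d z. dual_bound M d z (\<lambda>f. \<psi> f - \<psi>' f) e"
    by (intro bexI[of _ \<psi>]) (auto simp: db_iff)
qed

lemma free_lin:
  assumes "\<phi> \<in> free M d z" "\<psi> \<in> free M d z"
  shows "(\<lambda>g. a * \<phi> g + b * \<psi> g) \<in> free M d z"
  unfolding free_def
proof (intro CollectI conjI allI impI)
  fix f assume "f \<notin> lip0 M d z"
  then show "a * \<phi> f + b * \<psi> f = 0" using assms unfolding free_def by auto
next
  fix e :: real assume e: "0 < e"
  define e' where "e' = e / (\<bar>a\<bar> + \<bar>b\<bar> + 1)"
  have e': "0 < e'" using e by (simp add: e'_def)
  have "\<forall>e>0. \<exists>\<psi>\<in>fspan M d z. dual_bound M d z (\<lambda>f. \<phi> f - \<psi> f) e"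
       "\<forall>e>0. \<exists>\<psi>'\<in>fspan M d z. dual_bound M d z (\<lambda>f. \<psi> f - \<psi>' f) e"
      using assms unfolding free_def by blast+
  then obtain \<psi>1 \<psi>2 where p1: "\<psi>1 \<in> fspan M d z" "dual_bound M d z (\<lambda>f. \<phi> f - \<psi>1 f) e'"
     and p2: "\<psi>2 \<in> fspan M d z" "dual_bound M d z (\<lambda>f. \<psi> f - \<psi>2 f) e'"
    using e' by meson
  have a: "dual_bound M d z (\<lambda>f. a * (\<phi> f - \<psi>1 f)) (\<bar>a\<bar> * e')"
    by (rule db_scale[OF p1(2)]) (auto simp: abs_mult)
  have b: "dual_bound M d z (\<lambda>f. b * (\<psi> f - \<psi>2 f)) (\<bar>b\<bar> * e')"
    by (rule db_scale[OF p2(2)]) (auto simp: abs_mult)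
  have "dual_bound M d z (\<lambda>f. (a * \<phi> f + b * \<psi> f) - (a * \<psi>1 f + b * \<psi>2 f)) (\<bar>a\<bar> * e' + \<bar>b\<bar> * e')"
  proof (rule db_pw[OF a b], intro ballI)
    fix f
    show "\<bar>(a * \<phi> f + b * \<psi> f) - (a * \<psi>1 f + b * \<psi>2 f)\<bar> \<le> \<bar>a * (\<phi> f - \<psi>1 f)\<bar> + \<bar>b * (\<psi> f - \<psi>2 f)\<bar>"
      using abs_triangle_ineq[of "a * (\<phi> f - \<psi>1 f)" "b * (\<psi> f - \<psi>2 f)"] by (simp add: algebra_simps)
  qed
  moreover have "\<bar>a\<bar> * e' + \<bar>b\<bar> * e' \<le> e"
  proof -
    have "\<bar>a\<bar> * e' + \<bar>b\<bar> * e' \<le> (\<bar>a\<bar> + \<bar>b\<bar> + 1) * e'" using e' by (simp add: algebra_simps)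
    also have "\<dots> = e" unfolding e'_def by (simp add: add_pos_nonneg)
    finally show ?thesis .
  qed
  ultimately have "dual_bound M d z (\<lambda>f. (a * \<phi> f + b * \<psi> f) - (a * \<psi>1 f + b * \<psi>2 f)) e"
    by (rule db_mono)
  then show "\<exists>\<psi>'\<in>fspan M d z. dual_bound M d z (\<lambda>f. (a * \<phi> f + b * \<psi> f) - \<psi>' f) e"
    using fspan_lin[OF p1(1) p2(1)] by (intro bexI)
qed


lemma free_complete:
  assumes fr: "\<And>m. \<phi> m \<in> free M d z"
    and st: "\<And>m. dual_bound M d z (\<lambda>f. \<phi> m f - \<phi> (Suc m) f) ((1/2)^m)"
  shows "\<exists>ch\<in>free M d z. \<forall>n. dual_bound M d z (\<lambda>f. ch f - \<phi> n f) (2 * (1/2)^n)"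
proof -
  have ex: "\<exists>l. (\<lambda>m. \<phi> m f) \<longlonglongrightarrow> l \<and> (\<forall>n. \<bar>l - \<phi> n f\<bar> \<le> 2 * 1 * (1/2)^n)"
    if f: "f \<in> ball1 M d z" for f
  proof (rule geo_cauchy)
    fix m
    have "dual_bound M d z (\<lambda>f. \<phi> m f - \<phi> (Suc m) f) ((1/2)^m)" by (rule st)
    then have "\<forall>g\<in>ball1 M d z. \<bar>\<phi> m g - \<phi> (Suc m) g\<bar> \<le> (1/2)^m" by (simp add: db_iff)
    then show "\<bar>\<phi> m f - \<phi> (Suc m) f\<bar> \<le> 1 * (1/2)^m" using f by simp
  qed
  define ch where "ch f = (if f \<in> ball1 M d z then lim (\<lambda>m. \<phi> m f) else 0)" for f
  have cl: "dual_bound M d z (\<lambda>f. ch f - \<phi> n f) (2 * (1/2)^n)" for n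
    unfolding db_iff
  proof
    fix f assume f: "f \<in> ball1 M d z"
    obtain l where l: "(\<lambda>m. \<phi> m f) \<longlonglongrightarrow> l" "\<forall>n. \<bar>l - \<phi> n f\<bar> \<le> 2 * 1 * (1/2)^n"
      using ex[OF f] by blast
    have "ch f = l" using f l(1) by (simp add: ch_def limI)
    then show "\<bar>ch f - \<phi> n f\<bar> \<le> 2 * (1/2)^n" using l(2) by simp
  qed
  have "ch \<in> free M d z" unfolding free_def
  proof (intro CollectI conjI allI impI)
    fix f assume "f \<notin> lip0 M d z"
    then show "ch f = 0" using ball1_lip0 unfolding ch_def by auto
  next
    fix e :: real assume e: "0 < e"
    obtain n where n: "(1/2::real)^n < e / 4" using real_arch_pow_inv[of "e/4" "1/2"] e by auto
    have "\<forall>e>0. \<exists>\<psi>\<in>fspan M d z. dual_bound M d z (\<lambda>f. \<phi> n f - \<psi> f) e"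
      using fr[of n] unfolding free_def by blast
    then obtain \<psi> where p: "\<psi> \<in> fspan M d z" "dual_bound M d z (\<lambda>f. \<phi> n f - \<psi> f) (e/2)"
      using half_gt_zero[OF e] by blast
    have "dual_bound M d z (\<lambda>f. ch f - \<psi> f) (2 * (1/2)^n + e/2)"
      by (rule db_pw[OF cl[of n] p(2)]) auto
    moreover have "2 * (1/2::real)^n + e/2 \<le> e" using n by simp
    ultimately have "dual_bound M d z (\<lambda>f. ch f - \<psi> f) e" by (rule db_mono)
    then show "\<exists>\<psi>\<in>fspan M d z. dual_bound M d z (\<lambda>f. ch f - \<psi> f) e"
      using p(1) by blast
  qed
  then show ?thesis using cl by blast
qed

end

lemma ulim_ex:
  fixes h :: "'i \<Rightarrow> real"
  assumes uf: "is_ultrafilter U" and b: "\<forall>i. \<bar>h i\<bar> \<le> B"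
  shows "\<exists>l. (h \<longlongrightarrow> l) U"
proof -
  let ?F = "filtermap h U"
  have Fb: "?F \<noteq> bot" using uf by (simp add: is_ultrafilter_def filtermap_bot_iff)
  have "\<forall>i. h i \<in> {-B..B}"
  proof
    fix i have "\<bar>h i\<bar> \<le> B" using b by blast
    then show "h i \<in> {-B..B}" by (simp add: abs_le_iff)
  qed
  then have "eventually (\<lambda>x. x \<in> {-B..B}) ?F"
    unfolding eventually_filtermap by (intro always_eventually) blast
  then obtain l where l: "inf (nhds l) ?F \<noteq> bot"
    using compact_filter[THEN iffD1, OF compact_Icc, rule_format, OF Fb] by blast
  have "(h \<longlongrightarrow> l) U" unfolding tendsto_def
  proof (intro allI impI)
    fix S :: "real set" assume S: "open S" "l \<in> S"
    show "eventually (\<lambda>x. h x \<in> S) U"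
    proof (rule ccontr)
      assume "\<not> eventually (\<lambda>x. h x \<in> S) U"
      then have "eventually (\<lambda>x. \<not> h x \<in> S) U" using uf unfolding is_ultrafilter_def by blast
      then have 1: "eventually (\<lambda>x. x \<notin> S) ?F" by (simp add: eventually_filtermap)
      have 2: "eventually (\<lambda>x. x \<in> S) (nhds l)" using S by (rule eventually_nhds_in_open)
      have "eventually (\<lambda>_. False) (inf (nhds l) ?F)"
        unfolding eventually_inf using 1 2 by blast
      then show False using l by (simp add: eventually_False)
    qed
  qed
  then show ?thesis by blast
qed

lemma ulim:
  fixes h :: "'i \<Rightarrow> real"
  assumes uf: "is_ultrafilter U" and b: "\<forall>i. \<bar>h i\<bar> \<le> B"
  shows "(h \<longlongrightarrow> Lim U h) U"
proof -
  obtain l where "(h \<longlongrightarrow> l) U" using ulim_ex[OF assms] by blast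
  moreover have "U \<noteq> bot" using uf by (simp add: is_ultrafilter_def)
  ultimately show ?thesis using tendsto_Lim by (metis)
qed

locale ups =
  fixes U :: "'i filter" and M :: "'i \<Rightarrow> 'a set" and d :: "'i \<Rightarrow> 'a \<Rightarrow> 'a \<Rightarrow> real" and z :: "'i \<Rightarrow> 'a"
  assumes uf: "is_ultrafilter U" and ms: "\<forall>i. Metric_space (M i) (d i)" and zM: "\<forall>i. z i \<in> M i"
begin

lemma Ubot: "U \<noteq> bot" using uf by (simp add: is_ultrafilter_def)

lemma msi: "Metric_space (M i) (d i)" using ms by blast
lemma dnn: "0 \<le> d i x y" by (rule Metric_space.nonneg[OF msi])
lemma dcom: "d i x y = d i y x" by (rule Metric_space.commute[OF msi])
lemma dtri: "x \<in> M i \<Longrightarrow> y \<in> M i \<Longrightarrow> w \<in> M i \<Longrightarrow> d i x w \<le> d i x y + d i y w"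
  by (rule Metric_space.triangle[OF msi])
lemma dzero: "x \<in> M i \<Longrightarrow> d i x x = 0" by (rule Metric_space.mdist_zero[OF msi])

lemma coord: "pnsp (M i) (d i) (z i)"
  using zM dnn by (unfold_locales) auto

lemma linfD: "x \<in> linfM M d z \<Longrightarrow> x i \<in> M i" by (simp add: linfM_def)
lemma linf_bd: "x \<in> linfM M d z \<Longrightarrow> \<exists>B. \<forall>i. d i (x i) (z i) \<le> B" by (simp add: linfM_def)
lemma z_linf: "z \<in> linfM M d z" using zM dzero by (auto simp: linfM_def intro!: exI[of _ 0])

lemma pair_bd:
  assumes "x \<in> linfM M d z" "y \<in> linfM M d z"
  shows "\<exists>B. \<forall>i. \<bar>d i (x i) (y i)\<bar> \<le> B"
proof -
  obtain B1 B2 where B: "\<forall>i. d i (x i) (z i) \<le> B1" "\<forall>i. d i (y i) (z i) \<le> B2"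
    using linf_bd assms by metis
  have "\<bar>d i (x i) (y i)\<bar> \<le> B1 + B2" for i
  proof -
    have "d i (x i) (y i) \<le> d i (x i) (z i) + d i (z i) (y i)"
      using dtri linfD assms zM by blast
    then show ?thesis using B[rule_format, of i] dnn[of i "x i" "y i"] dcom[of i "z i" "y i"] by simp
  qed
  then show ?thesis by blast
qed

lemma updist_t:
  assumes "x \<in> linfM M d z" "y \<in> linfM M d z"
  shows "((\<lambda>i. d i (x i) (y i)) \<longlongrightarrow> updist U d x y) U"
proof -
  obtain B where "\<forall>i. \<bar>d i (x i) (y i)\<bar> \<le> B" using pair_bd[OF assms] by blast
  then show ?thesis unfolding updist_def by (rule ulim[OF uf])
qed

lemma updist_nn: "x \<in> linfM M d z \<Longrightarrow> y \<in> linfM M d z \<Longrightarrow> 0 \<le> updist U d x y"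
  by (rule tendsto_lowerbound[OF updist_t]) (auto simp: dnn Ubot)

lemma updist_com: "x \<in> linfM M d z \<Longrightarrow> y \<in> linfM M d z \<Longrightarrow> updist U d x y = updist U d y x"
  using tendsto_unique[OF Ubot updist_t[of x y]] updist_t[of y x] dcom by (metis (no_types, lifting) ext)

lemma updist_refl: "x \<in> linfM M d z \<Longrightarrow> updist U d x x = 0"
proof -
  assume x: "x \<in> linfM M d z"
  have "((\<lambda>i. d i (x i) (x i)) \<longlongrightarrow> 0) U" using dzero linfD[OF x] by simp
  then show ?thesis using tendsto_unique[OF Ubot updist_t[OF x x]] by blast
qed

lemma updist_tri:
  assumes "x \<in> linfM M d z" "y \<in> linfM M d z" "w \<in> linfM M d z"
  shows "updist U d x w \<le> updist U d x y + updist U d y w"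
proof (rule tendsto_le[OF Ubot])
  show "((\<lambda>i. d i (x i) (y i) + d i (y i) (w i)) \<longlongrightarrow> updist U d x y + updist U d y w) U"
    by (intro tendsto_add updist_t assms)
  show "((\<lambda>i. d i (x i) (w i)) \<longlongrightarrow> updist U d x w) U" by (intro updist_t assms)
  show "eventually (\<lambda>i. d i (x i) (w i) \<le> d i (x i) (y i) + d i (y i) (w i)) U"
    using dtri linfD assms by (intro always_eventually) blast
qed

abbreviation cls where "cls x \<equiv> upclass U M d z x"
definition rep :: "('i \<Rightarrow> 'a) set \<Rightarrow> 'i \<Rightarrow> 'a" where "rep A = (SOME x. x \<in> A)"

lemma cls_mem: "x \<in> linfM M d z \<Longrightarrow> x \<in> cls x"
  by (simp add: upclass_def updist_refl)

lemma cls_D: "y \<in> cls x \<Longrightarrow> y \<in> linfM M d z \<and> updist U d x y = 0"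
  by (simp add: upclass_def)

lemma cls_eq:
  assumes x: "x \<in> linfM M d z" and y: "y \<in> linfM M d z" and e: "updist U d x y = 0"
  shows "cls x = cls y"
proof -
  have "updist U d x w = 0 \<longleftrightarrow> updist U d y w = 0" if w: "w \<in> linfM M d z" for w
  proof -
    have "updist U d x w \<le> updist U d x y + updist U d y w" by (rule updist_tri[OF x y w])
    moreover have "updist U d y w \<le> updist U d y x + updist U d x w" by (rule updist_tri[OF y x w])
    moreover have "updist U d y x = 0" using e updist_com[OF x y] by simp
    moreover have "0 \<le> updist U d x w" "0 \<le> updist U d y w" using updist_nn x y w by auto
    ultimately show ?thesis using e by linarith
  qed
  then show ?thesis unfolding upclass_def by auto
qed

lemma rep_cls: assumes x: "x \<in> linfM M d z"
  shows "rep (cls x) \<in> linfM M d z" "updist U d x (rep (cls x)) = 0" "cls (rep (cls x)) = cls x"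
proof -
  have "rep (cls x) \<in> cls x" unfolding rep_def by (rule someI[of _ x]) (rule cls_mem[OF x])
  then show r: "rep (cls x) \<in> linfM M d z" "updist U d x (rep (cls x)) = 0" using cls_D by auto
  show "cls (rep (cls x)) = cls x" using cls_eq[OF x r(1) r(2)] by simp
qed

lemma uprod_rep: "A \<in> uprod U M d z \<Longrightarrow> rep A \<in> linfM M d z \<and> A = cls (rep A)"
  unfolding uprod_def using rep_cls by auto

lemma cls_uprod: "x \<in> linfM M d z \<Longrightarrow> cls x \<in> uprod U M d z"
  unfolding uprod_def by auto

lemma ud_cls:
  assumes x: "x \<in> linfM M d z" and y: "y \<in> linfM M d z"
  shows "uprod_dist U d (cls x) (cls y) = updist U d x y"
proof -
  have ud: "uprod_dist U d (cls x) (cls y) = updist U d (rep (cls x)) (rep (cls y))"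
    unfolding uprod_dist_def rep_def by simp
  let ?r = "rep (cls x)" and ?s = "rep (cls y)"
  have r: "?r \<in> linfM M d z" "updist U d x ?r = 0" using rep_cls[OF x] by auto
  have s: "?s \<in> linfM M d z" "updist U d y ?s = 0" using rep_cls[OF y] by auto
  have "updist U d ?r ?s \<le> updist U d ?r x + updist U d x ?s" using updist_tri r s x by blast
  moreover have "updist U d x ?s \<le> updist U d x y + updist U d y ?s" using updist_tri s x y by blast
  moreover have "updist U d x y \<le> updist U d x ?r + updist U d ?r y" using updist_tri r x y by blast
  moreover have "updist U d ?r y \<le> updist U d ?r ?s + updist U d ?s y" using updist_tri r s y by blast
  moreover have "updist U d ?r x = 0" "updist U d ?s y = 0"
    using r s updist_com x y by auto
  ultimately show ?thesis using ud r(2) s(2) by linarith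
qed

lemma base_cls: "uprod_base U M d z = cls z" by (simp add: uprod_base_def)

lemma uprod_nn: "\<forall>A\<in>uprod U M d z. \<forall>B\<in>uprod U M d z. 0 \<le> uprod_dist U d A B"
  using uprod_rep ud_cls updist_nn by metis

end

sublocale ups \<subseteq> UP: pnsp "uprod U M d z" "uprod_dist U d" "uprod_base U M d z"
  using uprod_nn cls_uprod z_linf base_cls by unfold_locales auto

lemma mcshane:
  fixes a :: "'p \<Rightarrow> real" and pt :: "'p \<Rightarrow> 'b"
  assumes ms: "Metric_space M d" and P: "finite P" "P \<noteq> {}" and pt: "\<forall>p\<in>P. pt p \<in> M"
    and L: "0 < L" and lip: "\<forall>p\<in>P. \<forall>q\<in>P. \<bar>a p - a q\<bar> \<le> L * d (pt p) (pt q)"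
  defines "h \<equiv> \<lambda>y. if y \<in> M then Min ((\<lambda>q. a q + L * d y (pt q)) ` P) / L else 0"
  shows "\<forall>p\<in>P. h (pt p) = a p / L" "\<forall>x\<in>M. \<forall>y\<in>M. \<bar>h x - h y\<bar> \<le> d x y" "\<forall>x. x \<notin> M \<longrightarrow> h x = 0"
proof -
  define m where "m y = Min ((\<lambda>q. a q + L * d y (pt q)) ` P)" for y
  have fin: "finite ((\<lambda>q. a q + L * d y (pt q)) ` P)" "(\<lambda>q. a q + L * d y (pt q)) ` P \<noteq> {}" for y
    using P by auto
  have mle: "m y \<le> a q + L * d y (pt q)" if "q \<in> P" for y q
    unfolding m_def using fin that by (intro Min_le) auto
  have mex: "\<exists>q\<in>P. m y = a q + L * d y (pt q)" for y
    unfolding m_def using Min_in[OF fin(1) fin(2), of y] by auto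
  show "\<forall>p\<in>P. h (pt p) = a p / L"
  proof
    fix p assume p: "p \<in> P"
    have "m (pt p) \<le> a p" using mle[OF p, of "pt p"] Metric_space.mdist_zero[OF ms] pt p by simp
    moreover have "a p \<le> m (pt p)"
    proof -
      obtain q where q: "q \<in> P" "m (pt p) = a q + L * d (pt p) (pt q)" using mex by blast
      have "\<bar>a p - a q\<bar> \<le> L * d (pt p) (pt q)" using lip p q by blast
      then show ?thesis using q by linarith
    qed
    ultimately show "h (pt p) = a p / L" using pt p unfolding h_def m_def[symmetric] by simp
  qed
  have one: "m x \<le> m y + L * d x y" if xy: "x \<in> M" "y \<in> M" for x y
  proof -
    obtain q where q: "q \<in> P" "m y = a q + L * d y (pt q)" using mex by blast
    have "d x (pt q) \<le> d x y + d y (pt q)" using Metric_space.triangle[OF ms] xy pt q by blast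
    then have "L * d x (pt q) \<le> L * d x y + L * d y (pt q)" using L
      by (metis distrib_left mult_le_cancel_left_pos)
    then show ?thesis using mle[OF q(1), of x] q(2) by linarith
  qed
  show "\<forall>x\<in>M. \<forall>y\<in>M. \<bar>h x - h y\<bar> \<le> d x y"
  proof (intro ballI)
    fix x y assume xy: "x \<in> M" "y \<in> M"
    have "m y \<le> m x + L * d x y" using one[OF xy(2) xy(1)] Metric_space.commute[OF ms, of x y] by simp
    then have "\<bar>m x - m y\<bar> \<le> L * d x y" using one[OF xy] by (simp add: abs_le_iff)
    then have "\<bar>m x - m y\<bar> / L \<le> d x y" using L by (simp add: divide_le_eq mult.commute)
    moreover have "h x - h y = (m x - m y) / L" using xy unfolding h_def m_def by (simp add: diff_divide_distrib)
    ultimately show "\<bar>h x - h y\<bar> \<le> d x y" using L by simp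
  qed
  show "\<forall>x. x \<notin> M \<longrightarrow> h x = 0" unfolding h_def by simp
qed

context ups begin

lemma coordn: "nnsp (M i) (d i)" using coord by (simp add: pnsp_def)

abbreviation "UM \<equiv> uprod U M d z"
abbreviation "UD \<equiv> uprod_dist U d"
abbreviation "UB \<equiv> uprod_base U M d z"

definition Jf :: "('i \<Rightarrow> 'a) set \<Rightarrow> (('i \<Rightarrow> 'a) \<Rightarrow> real) \<Rightarrow> 'i \<Rightarrow> ('a \<Rightarrow> real) \<Rightarrow> real" where
  "Jf S c = (\<lambda>i f. \<Sum>x\<in>S. c x * udelta M d z x i f)"
definition Pf :: "('i \<Rightarrow> 'a) set \<Rightarrow> (('i \<Rightarrow> 'a) \<Rightarrow> real) \<Rightarrow> (('i \<Rightarrow> 'a) set \<Rightarrow> real) \<Rightarrow> real" where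
  "Pf S c = (\<lambda>g. \<Sum>x\<in>S. c x * fdelta UM UD UB (cls x) g)"

lemma Jf_eval: "f \<in> ball1 (M i) (d i) (z i) \<Longrightarrow> Jf S c i f = (\<Sum>x\<in>S. c x * f (x i))"
  using pnsp.ball1_lip0[OF coord] by (simp add: Jf_def udelta_def fdelta_def)

lemma Pf_eval: "g \<in> ball1 UM UD UB \<Longrightarrow> Pf S c g = (\<Sum>x\<in>S. c x * g (cls x))"
  using UP.ball1_lip0 by (simp add: Pf_def fdelta_def)

definition bdl :: "('i \<Rightarrow> 'a) \<Rightarrow> real" where "bdl x = (SOME B. \<forall>i. d i (x i) (z i) \<le> B)"

lemma bdl: "x \<in> linfM M d z \<Longrightarrow> d i (x i) (z i) \<le> bdl x"
  unfolding bdl_def using someI_ex[OF linf_bd] by blast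

lemma ball_pt: "f \<in> ball1 (M i) (d i) (z i) \<Longrightarrow> x \<in> linfM M d z \<Longrightarrow> \<bar>f (x i)\<bar> \<le> bdl x"
  using pnsp.ball1_le[OF coord] linfD bdl by (meson order_trans)

lemma Jf_bd:
  assumes S: "finite S" "S \<subseteq> linfM M d z"
  shows "dual_bound (M i) (d i) (z i) (Jf S c i) (\<Sum>x\<in>S. \<bar>c x\<bar> * bdl x)"
  unfolding nnsp.db_iff[OF coordn]
proof
  fix f assume f: "f \<in> ball1 (M i) (d i) (z i)"
  have "\<bar>Jf S c i f\<bar> = \<bar>\<Sum>x\<in>S. c x * f (x i)\<bar>" using Jf_eval[OF f] by simp
  also have "\<dots> \<le> (\<Sum>x\<in>S. \<bar>c x * f (x i)\<bar>)" by (rule sum_abs)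
  also have "\<dots> \<le> (\<Sum>x\<in>S. \<bar>c x\<bar> * bdl x)"
  proof (rule sum_mono)
    fix x assume "x \<in> S"
    then have "\<bar>f (x i)\<bar> \<le> bdl x" using ball_pt[OF f] S by blast
    then show "\<bar>c x * f (x i)\<bar> \<le> \<bar>c x\<bar> * bdl x" by (simp add: abs_mult mult_left_mono)
  qed
  finally show "\<bar>Jf S c i f\<bar> \<le> (\<Sum>x\<in>S. \<bar>c x\<bar> * bdl x)" .
qed

lemma dn_i_nn: "dual_bound (M i) (d i) (z i) \<phi> e \<Longrightarrow> 0 \<le> dnorm (M i) (d i) (z i) \<phi>"
  using nnsp.dn_nonneg[OF coordn] by blast


lemma ball_lipi: "f \<in> ball1 (M i) (d i) (z i) \<Longrightarrow> x \<in> M i \<Longrightarrow> y \<in> M i \<Longrightarrow> \<bar>f x - f y\<bar> \<le> d i x y"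
  unfolding ball1_def by blast

lemma ball_lipU: "g \<in> ball1 UM UD UB \<Longrightarrow> A \<in> UM \<Longrightarrow> B \<in> UM \<Longrightarrow> \<bar>g A - g B\<bar> \<le> UD A B"
  unfolding ball1_def by blast

lemma UD_rep: "UD A B = updist U d (rep A) (rep B)"
  unfolding uprod_dist_def rep_def by simp

lemma ISO:
  assumes S: "finite S" "S \<subseteq> linfM M d z"
  shows "((\<lambda>i. dnorm (M i) (d i) (z i) (Jf S c i)) \<longlongrightarrow> dnorm UM UD UB (Pf S c)) U"
    and "dual_bound UM UD UB (Pf S c) (dnorm UM UD UB (Pf S c))"
proof -
  define B where "B = (\<Sum>x\<in>S. \<bar>c x\<bar> * bdl x)"
  define N where "N i = dnorm (M i) (d i) (z i) (Jf S c i)" for i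
  have db: "dual_bound (M i) (d i) (z i) (Jf S c i) B" for i using Jf_bd S B_def by simp
  have Nb: "0 \<le> N i" "N i \<le> B" for i
    unfolding N_def using nnsp.dn_nonneg[OF coordn db] nnsp.dn_le[OF coordn db] by auto
  have "\<forall>i. \<bar>N i\<bar> \<le> B" using Nb by (simp add: abs_le_iff)
  then have NL: "(N \<longlongrightarrow> Lim U N) U" by (rule ulim[OF uf])
  define L where "L = Lim U N"
  have NL': "(N \<longlongrightarrow> L) U" using NL L_def by simp
  have L0: "0 \<le> L" by (rule tendsto_lowerbound[OF NL']) (use Nb Ubot in auto)
  have Pin: "insert z S \<subseteq> linfM M d z" using S z_linf by auto
  have A': "\<bar>Pf S c g\<bar> \<le> (1 + \<delta>) * L" if g: "g \<in> ball1 UM UD UB" and \<delta>: "0 < \<delta>" for g \<delta>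
  proof -
    let ?Lk = "1 + \<delta>" and ?P = "insert z S"
    define a where "a p = g (cls p)" for p
    have lipU: "\<bar>a p - a q\<bar> \<le> updist U d p q" if "p \<in> ?P" "q \<in> ?P" for p q
    proof -
      have pq: "p \<in> linfM M d z" "q \<in> linfM M d z" using that Pin by auto
      show ?thesis unfolding a_def using ball_lipU[OF g cls_uprod[OF pq(1)] cls_uprod[OF pq(2)]] ud_cls[OF pq] by simp
    qed
    have ev1: "eventually (\<lambda>i. \<bar>a p - a q\<bar> \<le> ?Lk * d i (p i) (q i)) U"
      if pq: "p \<in> ?P" "q \<in> ?P" for p q
    proof -
      have pq': "p \<in> linfM M d z" "q \<in> linfM M d z" using pq Pin by auto
      show "eventually (\<lambda>i. \<bar>a p - a q\<bar> \<le> ?Lk * d i (p i) (q i)) U"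
      proof (cases "updist U d p q = 0")
        case True
        then have "\<bar>a p - a q\<bar> \<le> 0" using lipU[OF pq] by simp
        moreover have "0 \<le> ?Lk * d i (p i) (q i)" for i using \<delta> dnn by simp
        ultimately show ?thesis by (intro always_eventually) (meson order_trans)
      next
        case False
        then have pos: "0 < updist U d p q" using updist_nn[OF pq'] by simp
        then have "updist U d p q / ?Lk < updist U d p q" using \<delta> by (simp add: divide_less_eq)
        then have "eventually (\<lambda>i. updist U d p q / ?Lk < d i (p i) (q i)) U"
          by (rule order_tendstoD(1)[OF updist_t[OF pq']])
        then show ?thesis
        proof (rule eventually_mono)
          fix i assume "updist U d p q / ?Lk < d i (p i) (q i)"
          then have "updist U d p q < ?Lk * d i (p i) (q i)" using \<delta> by (simp add: pos_divide_less_eq mult.commute)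
          then show "\<bar>a p - a q\<bar> \<le> ?Lk * d i (p i) (q i)" using lipU[OF pq] by linarith
        qed
      qed
    qed
    have ev: "eventually (\<lambda>i. \<forall>p\<in>?P. \<forall>q\<in>?P. \<bar>a p - a q\<bar> \<le> ?Lk * d i (p i) (q i)) U"
    proof -
      have fP: "finite ?P" using S by simp
      have "\<forall>p\<in>?P. eventually (\<lambda>i. \<forall>q\<in>?P. \<bar>a p - a q\<bar> \<le> ?Lk * d i (p i) (q i)) U"
      proof
        fix p assume p: "p \<in> ?P"
        show "eventually (\<lambda>i. \<forall>q\<in>?P. \<bar>a p - a q\<bar> \<le> ?Lk * d i (p i) (q i)) U"
          by (rule eventually_ball_finite[OF fP]) (use ev1 p in blast)
      qed
      then show ?thesis by (rule eventually_ball_finite[OF fP])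
    qed
    have "eventually (\<lambda>i. \<bar>Pf S c g\<bar> \<le> ?Lk * N i) U"
      using ev
    proof (rule eventually_mono)
      fix i assume H: "\<forall>p\<in>?P. \<forall>q\<in>?P. \<bar>a p - a q\<bar> \<le> ?Lk * d i (p i) (q i)"
      define h where "h = (\<lambda>y. if y \<in> M i then Min ((\<lambda>q. a q + ?Lk * d i y (q i)) ` ?P) / ?Lk else 0)"
      have pts: "\<forall>p\<in>?P. p i \<in> M i" using Pin linfD by blast
      have fP: "finite ?P" "?P \<noteq> {}" using S by auto
      have h1: "\<forall>p\<in>?P. h (p i) = a p / ?Lk" unfolding h_def
        by (rule mcshane(1)[OF msi[of i] fP, where pt="\<lambda>p. p i"]) (use pts \<delta> H in auto)
      have h2: "\<forall>x\<in>M i. \<forall>y\<in>M i. \<bar>h x - h y\<bar> \<le> d i x y" unfolding h_def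
        by (rule mcshane(2)[OF msi[of i] fP, where pt="\<lambda>p. p i"]) (use pts \<delta> H in auto)
      have h3: "\<forall>x. x \<notin> M i \<longrightarrow> h x = 0" unfolding h_def by simp
      have gB: "g UB = 0" using g unfolding ball1_def by blast
      have "h (z i) = 0" using h1 gB base_cls unfolding a_def by simp
      then have hb: "h \<in> ball1 (M i) (d i) (z i)" using h2 h3 unfolding ball1_def by blast
      have "Jf S c i h = (\<Sum>x\<in>S. c x * (a x / ?Lk))" using Jf_eval[OF hb] h1 by simp
      also have "\<dots> = Pf S c g / ?Lk" using Pf_eval[OF g] unfolding a_def
        by (simp add: sum_divide_distrib)
      finally have "Jf S c i h = Pf S c g / ?Lk" .
      moreover have "\<bar>Jf S c i h\<bar> \<le> N i" unfolding N_def using nnsp.dn_ge[OF coordn db hb] .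
      ultimately have "\<bar>Pf S c g\<bar> / ?Lk \<le> N i" using \<delta> by simp
      then show "\<bar>Pf S c g\<bar> \<le> ?Lk * N i" using \<delta> by (simp add: divide_le_eq mult.commute)
    qed
    moreover have "((\<lambda>i. ?Lk * N i) \<longlongrightarrow> ?Lk * L) U" by (intro tendsto_mult_left NL')
    ultimately show ?thesis by (intro tendsto_le[OF Ubot _ tendsto_const])
  qed
  have A: "\<bar>Pf S c g\<bar> \<le> L" if g: "g \<in> ball1 UM UD UB" for g
  proof (rule field_le_epsilon)
    fix e :: real assume e: "0 < e"
    have "\<bar>Pf S c g\<bar> \<le> (1 + e / (L + 1)) * L" using A'[OF g] e L0 by simp
    also have "\<dots> = L + e * (L / (L + 1))" using L0 by (simp add: algebra_simps)
    also have "\<dots> \<le> L + e * 1" using L0 e by (intro add_left_mono mult_left_mono) auto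
    finally show "\<bar>Pf S c g\<bar> \<le> L + e" by simp
  qed
  then have dbP: "dual_bound UM UD UB (Pf S c) L" using UP.db_iff by blast
  have Bd: "L - \<epsilon> \<le> dnorm UM UD UB (Pf S c)" if \<epsilon>: "0 < \<epsilon>" for \<epsilon>
  proof -
    have exF: "\<exists>f\<in>ball1 (M i) (d i) (z i). N i - \<epsilon> < \<bar>Jf S c i f\<bar>" for i
      unfolding N_def using nnsp.dn_approx[OF coordn db \<epsilon>] .
    define F where "F i = (SOME f. f \<in> ball1 (M i) (d i) (z i) \<and> N i - \<epsilon> < \<bar>Jf S c i f\<bar>)" for i
    have Fb: "F i \<in> ball1 (M i) (d i) (z i)" and Fg: "N i - \<epsilon> < \<bar>Jf S c i (F i)\<bar>" for i
      using someI_ex[OF exF[of i, unfolded Bex_def]] unfolding F_def by blast+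
    have Ft: "((\<lambda>i. F i (x i)) \<longlongrightarrow> Lim U (\<lambda>i. F i (x i))) U" if x: "x \<in> linfM M d z" for x
      by (rule ulim[OF uf]) (use ball_pt[OF Fb x] in blast)
    define g where "g A = (if A \<in> UM then Lim U (\<lambda>i. F i (rep A i)) else 0)" for A
    have gcls: "((\<lambda>i. F i (x i)) \<longlongrightarrow> g (cls x)) U" if x: "x \<in> linfM M d z" for x
    proof -
      let ?r = "rep (cls x)"
      have r: "?r \<in> linfM M d z" "updist U d x ?r = 0" using rep_cls[OF x] by auto
      have gr: "g (cls x) = Lim U (\<lambda>i. F i (?r i))" using cls_uprod[OF x] g_def by simp
      have t1: "((\<lambda>i. F i (?r i)) \<longlongrightarrow> g (cls x)) U" using Ft[OF r(1)] gr by simp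
      have t0: "((\<lambda>i. d i (x i) (?r i)) \<longlongrightarrow> 0) U" using updist_t[OF x r(1)] r(2) by simp
      have t2: "((\<lambda>i. F i (x i) - F i (?r i)) \<longlongrightarrow> 0) U"
      proof (rule Lim_null_comparison[OF _ t0])
        show "eventually (\<lambda>i. norm (F i (x i) - F i (?r i)) \<le> d i (x i) (?r i)) U"
          using ball_lipi[OF Fb] linfD[OF x] linfD[OF r(1)] by (intro always_eventually) auto
      qed
      have "((\<lambda>i. (F i (x i) - F i (?r i)) + F i (?r i)) \<longlongrightarrow> 0 + g (cls x)) U"
        by (rule tendsto_add[OF t2 t1])
      then show ?thesis by simp
    qed
    have gball: "g \<in> ball1 UM UD UB" unfolding ball1_def
    proof (intro CollectI conjI allI impI ballI)
      have "((\<lambda>i. F i (z i)) \<longlongrightarrow> g (cls z)) U" by (rule gcls[OF z_linf])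
      moreover have "F i (z i) = 0" for i using Fb[of i] unfolding ball1_def by blast
      ultimately have "((\<lambda>i. 0) \<longlongrightarrow> g (cls z)) U" by simp
      then have "g (cls z) = 0" using tendsto_unique[OF Ubot] tendsto_const by blast
      then show "g UB = 0" using base_cls by simp
    next
      fix A assume "A \<notin> UM" then show "g A = 0" by (simp add: g_def)
    next
      fix A B assume AB: "A \<in> UM" "B \<in> UM"
      have a: "rep A \<in> linfM M d z" "A = cls (rep A)" using uprod_rep[OF AB(1)] by auto
      have b: "rep B \<in> linfM M d z" "B = cls (rep B)" using uprod_rep[OF AB(2)] by auto
      have ta: "((\<lambda>i. F i (rep A i)) \<longlongrightarrow> g A) U" using gcls[OF a(1)] a(2) by simp
      have tb: "((\<lambda>i. F i (rep B i)) \<longlongrightarrow> g B) U" using gcls[OF b(1)] b(2) by simp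
      show "\<bar>g A - g B\<bar> \<le> UD A B" unfolding UD_rep
      proof (rule tendsto_le[OF Ubot updist_t[OF a(1) b(1)]])
        show "((\<lambda>i. \<bar>F i (rep A i) - F i (rep B i)\<bar>) \<longlongrightarrow> \<bar>g A - g B\<bar>) U"
          by (intro tendsto_intros ta tb)
        show "eventually (\<lambda>i. \<bar>F i (rep A i) - F i (rep B i)\<bar> \<le> d i (rep A i) (rep B i)) U"
          using ball_lipi[OF Fb] linfD[OF a(1)] linfD[OF b(1)] by (intro always_eventually) auto
      qed
    qed
    have tJ: "((\<lambda>i. Jf S c i (F i)) \<longlongrightarrow> Pf S c g) U"
    proof -
      have "((\<lambda>i. \<Sum>x\<in>S. c x * F i (x i)) \<longlongrightarrow> (\<Sum>x\<in>S. c x * g (cls x))) U"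
        using S by (intro tendsto_sum tendsto_mult_left gcls) auto
      then show ?thesis using Jf_eval[OF Fb] Pf_eval[OF gball] by simp
    qed
    have "L - \<epsilon> \<le> \<bar>Pf S c g\<bar>"
    proof (rule tendsto_le[OF Ubot])
      show "((\<lambda>i. \<bar>Jf S c i (F i)\<bar>) \<longlongrightarrow> \<bar>Pf S c g\<bar>) U" by (intro tendsto_intros tJ)
      show "((\<lambda>i. N i - \<epsilon>) \<longlongrightarrow> L - \<epsilon>) U" by (intro tendsto_intros NL')
      show "eventually (\<lambda>i. N i - \<epsilon> \<le> \<bar>Jf S c i (F i)\<bar>) U"
        using Fg by (intro always_eventually) (simp add: less_imp_le)
    qed
    also have "\<dots> \<le> dnorm UM UD UB (Pf S c)" by (rule UP.dn_ge[OF dbP gball])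
    finally show ?thesis .
  qed
  have "dnorm UM UD UB (Pf S c) \<le> L" by (rule UP.dn_le[OF dbP])
  moreover have "L \<le> dnorm UM UD UB (Pf S c)"
  proof (rule field_le_epsilon)
    fix e :: real assume "0 < e"
    then show "L \<le> dnorm UM UD UB (Pf S c) + e" using Bd[of e] by linarith
  qed
  ultimately have eq: "dnorm UM UD UB (Pf S c) = L" by simp
  show "((\<lambda>i. dnorm (M i) (d i) (z i) (Jf S c i)) \<longlongrightarrow> dnorm UM UD UB (Pf S c)) U"
    using NL' eq unfolding N_def by simp
  show "dual_bound UM UD UB (Pf S c) (dnorm UM UD UB (Pf S c))" by (rule UP.dn_db[OF dbP])
qed
end

lemma sum_group:
  fixes c :: "'x \<Rightarrow> real" and F :: "'y \<Rightarrow> real"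
  assumes "finite S"
  shows "(\<Sum>x\<in>S. c x * F (g x)) = (\<Sum>y\<in>g ` S. (\<Sum>x\<in>{x\<in>S. g x = y}. c x) * F y)"
proof -
  have "(\<Sum>x\<in>S. c x * F (g x)) = (\<Sum>y\<in>g ` S. \<Sum>x\<in>{x\<in>S. g x = y}. c x * F (g x))"
    by (rule sum.image_gen[OF assms])
  also have "\<dots> = (\<Sum>y\<in>g ` S. (\<Sum>x\<in>{x\<in>S. g x = y}. c x) * F y)"
    by (rule sum.cong) (auto simp: sum_distrib_right)
  finally show ?thesis .
qed

context ups begin

definition bfam :: "('i \<Rightarrow> ('a \<Rightarrow> real) \<Rightarrow> real) \<Rightarrow> bool" where
  "bfam \<Phi> \<longleftrightarrow> (\<exists>B. \<forall>i. dual_bound (M i) (d i) (z i) (\<Phi> i) B)"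

lemma un_t:
  assumes "bfam \<Phi>"
  shows "((\<lambda>i. dnorm (M i) (d i) (z i) (\<Phi> i)) \<longlongrightarrow> unorm U M d z \<Phi>) U"
proof -
  obtain B where B: "\<And>i. dual_bound (M i) (d i) (z i) (\<Phi> i) B" using assms bfam_def by blast
  have "\<forall>i. \<bar>dnorm (M i) (d i) (z i) (\<Phi> i)\<bar> \<le> B"
    using nnsp.dn_nonneg[OF coordn B] nnsp.dn_le[OF coordn B] by (simp add: abs_le_iff)
  then show ?thesis unfolding unorm_def by (rule ulim[OF uf])
qed

lemma un_nn: "bfam \<Phi> \<Longrightarrow> 0 \<le> unorm U M d z \<Phi>"
proof -
  assume b: "bfam \<Phi>"
  obtain B where B: "\<And>i. dual_bound (M i) (d i) (z i) (\<Phi> i) B" using b bfam_def by blast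
  show ?thesis
    by (rule tendsto_lowerbound[OF un_t[OF b]]) (use nnsp.dn_nonneg[OF coordn B] Ubot in auto)
qed

lemma un_le:
  assumes "bfam \<Phi>" "eventually (\<lambda>i. dual_bound (M i) (d i) (z i) (\<Phi> i) e) U"
  shows "unorm U M d z \<Phi> \<le> e"
proof (rule tendsto_upperbound[OF un_t[OF assms(1)] _ Ubot])
  show "eventually (\<lambda>i. dnorm (M i) (d i) (z i) (\<Phi> i) \<le> e) U"
    using assms(2) by (rule eventually_mono) (rule nnsp.dn_le[OF coordn])
qed

lemma un_lt:
  assumes "bfam \<Phi>" "unorm U M d z \<Phi> < e"
  shows "eventually (\<lambda>i. dual_bound (M i) (d i) (z i) (\<Phi> i) e) U"
proof -
  obtain B where B: "\<And>i. dual_bound (M i) (d i) (z i) (\<Phi> i) B" using assms bfam_def by blast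
  have "eventually (\<lambda>i. dnorm (M i) (d i) (z i) (\<Phi> i) < e) U"
    by (rule order_tendstoD(2)[OF un_t[OF assms(1)] assms(2)])
  then show ?thesis
    by (rule eventually_mono) (use nnsp.db_le_dn[OF coordn B] in force)
qed

lemma un_close:
  assumes "bfam \<Phi>" "bfam \<Psi>" "eventually (\<lambda>i. dual_bound (M i) (d i) (z i) (\<lambda>f. \<Phi> i f - \<Psi> i f) e) U"
  shows "\<bar>unorm U M d z \<Phi> - unorm U M d z \<Psi>\<bar> \<le> e"
proof -
  obtain B where B: "\<And>i. dual_bound (M i) (d i) (z i) (\<Phi> i) B" using assms bfam_def by blast
  have "((\<lambda>i. \<bar>dnorm (M i) (d i) (z i) (\<Phi> i) - dnorm (M i) (d i) (z i) (\<Psi> i)\<bar>)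
     \<longlongrightarrow> \<bar>unorm U M d z \<Phi> - unorm U M d z \<Psi>\<bar>) U"
    by (intro tendsto_intros un_t assms)
  then show ?thesis
  proof (rule tendsto_upperbound[OF _ _ Ubot])
    show "eventually (\<lambda>i. \<bar>dnorm (M i) (d i) (z i) (\<Phi> i) - dnorm (M i) (d i) (z i) (\<Psi> i)\<bar> \<le> e) U"
      using assms(3) by (rule eventually_mono) (rule nnsp.dn_lip[OF coordn B])
  qed
qed

lemma bfam_pw:
  assumes "bfam \<Phi>" "bfam \<Psi>"
    "\<And>i f. f \<in> ball1 (M i) (d i) (z i) \<Longrightarrow> \<bar>X i f\<bar> \<le> \<bar>a\<bar> * \<bar>\<Phi> i f\<bar> + \<bar>b\<bar> * \<bar>\<Psi> i f\<bar>"
  shows "bfam X"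
proof -
  obtain B1 where B1: "\<And>i. dual_bound (M i) (d i) (z i) (\<Phi> i) B1" using assms bfam_def by blast
  obtain B2 where B2: "\<And>i. dual_bound (M i) (d i) (z i) (\<Psi> i) B2" using assms bfam_def by blast
  have "dual_bound (M i) (d i) (z i) (X i) (\<bar>a\<bar> * B1 + \<bar>b\<bar> * B2)" for i
  proof (rule nnsp.db_pw[OF coordn nnsp.db_scale[OF coordn B1[of i]] nnsp.db_scale[OF coordn B2[of i]]])
    show "\<forall>f\<in>ball1 (M i) (d i) (z i). \<bar>a * \<Phi> i f\<bar> \<le> \<bar>a\<bar> * \<bar>\<Phi> i f\<bar>" by (simp add: abs_mult)
    show "\<forall>f\<in>ball1 (M i) (d i) (z i). \<bar>b * \<Psi> i f\<bar> \<le> \<bar>b\<bar> * \<bar>\<Psi> i f\<bar>" by (simp add: abs_mult)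
    show "\<forall>f\<in>ball1 (M i) (d i) (z i). \<bar>X i f\<bar> \<le> \<bar>a * \<Phi> i f\<bar> + \<bar>b * \<Psi> i f\<bar>"
      using assms(3) by (simp add: abs_mult)
  qed
  then show ?thesis unfolding bfam_def by blast
qed

lemma bfam_diff: "bfam \<Phi> \<Longrightarrow> bfam \<Psi> \<Longrightarrow> bfam (\<lambda>i f. \<Phi> i f - \<Psi> i f)"
proof -
  assume a: "bfam \<Phi>" "bfam \<Psi>"
  show ?thesis
  proof (rule bfam_pw[OF a, where a=1 and b=1])
    fix i f show "\<bar>\<Phi> i f - \<Psi> i f\<bar> \<le> \<bar>1::real\<bar> * \<bar>\<Phi> i f\<bar> + \<bar>1::real\<bar> * \<bar>\<Psi> i f\<bar>" by simp
  qed
qed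

lemma linfF_bfam: assumes "\<Phi> \<in> linfF M d z" shows "bfam \<Phi>"
proof -
  obtain B where B: "\<forall>i. dnorm (M i) (d i) (z i) (\<Phi> i) \<le> B" and fr: "\<forall>i. \<Phi> i \<in> free (M i) (d i) (z i)"
    using assms linfF_def by blast
  have "dual_bound (M i) (d i) (z i) (\<Phi> i) B" for i
  proof -
    obtain e where "dual_bound (M i) (d i) (z i) (\<Phi> i) e" using pnsp.free_bdd[OF coord] fr by blast
    then show ?thesis using nnsp.db_le_dn[OF coordn] B by blast
  qed
  then show ?thesis unfolding bfam_def by blast
qed

lemma Jf_bfam: assumes S: "finite S" "S \<subseteq> linfM M d z" shows "bfam (Jf S c)"
proof -
  have "\<forall>i. dual_bound (M i) (d i) (z i) (Jf S c i) (\<Sum>x\<in>S. \<bar>c x\<bar> * bdl x)"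
    using Jf_bd[OF S] by blast
  then show ?thesis unfolding bfam_def by (rule exI)
qed

lemma Jf_fspan:
  assumes S: "finite S" "S \<subseteq> linfM M d z"
  shows "Jf S c i \<in> fspan (M i) (d i) (z i)"
proof -
  have "Jf S c i f = (\<Sum>y\<in>(\<lambda>x. x i) ` S. (\<Sum>x\<in>{x\<in>S. x i = y}. c x) * fdelta (M i) (d i) (z i) y f)" for f
    unfolding Jf_def udelta_def
    by (rule sum_group[OF S(1), where c=c and F="\<lambda>y. fdelta (M i) (d i) (z i) y f" and g="\<lambda>x. x i"])
  then have "Jf S c i = (\<lambda>f. \<Sum>y\<in>(\<lambda>x. x i) ` S. (\<Sum>x\<in>{x\<in>S. x i = y}. c x) * fdelta (M i) (d i) (z i) y f)"
    by (intro ext)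
  moreover have "(\<lambda>x. x i) ` S \<subseteq> M i" using S linfD by blast
  ultimately show ?thesis unfolding fspan_def using S(1)
    by (intro CollectI exI[of _ "(\<lambda>x. x i) ` S"] exI[of _ "\<lambda>y. \<Sum>x\<in>{x\<in>S. x i = y}. c x"]) simp
qed

lemma Jf_linfF:
  assumes S: "finite S" "S \<subseteq> linfM M d z"
  shows "Jf S c \<in> linfF M d z"
  unfolding linfF_def
proof (intro CollectI conjI allI exI)
  fix i show "Jf S c i \<in> free (M i) (d i) (z i)" using pnsp.fspan_free[OF coord Jf_fspan[OF S]] .
  show "dnorm (M i) (d i) (z i) (Jf S c i) \<le> (\<Sum>x\<in>S. \<bar>c x\<bar> * bdl x)"
    by (rule nnsp.dn_le[OF coordn Jf_bd[OF S]])
qed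

lemma Pf_fspan:
  assumes S: "finite S" "S \<subseteq> linfM M d z"
  shows "Pf S c \<in> fspan UM UD UB"
proof -
  have "Pf S c g = (\<Sum>y\<in>cls ` S. (\<Sum>x\<in>{x\<in>S. cls x = y}. c x) * fdelta UM UD UB y g)" for g
    unfolding Pf_def
    by (rule sum_group[OF S(1), where c=c and F="\<lambda>y. fdelta UM UD UB y g" and g="\<lambda>x. cls x"])
  then have "Pf S c = (\<lambda>g. \<Sum>y\<in>cls ` S. (\<Sum>x\<in>{x\<in>S. cls x = y}. c x) * fdelta UM UD UB y g)"
    by (intro ext)
  moreover have "cls ` S \<subseteq> UM" using S cls_uprod by blast
  ultimately show ?thesis unfolding fspan_def using S(1)
    by (intro CollectI exI[of _ "cls ` S"] exI[of _ "\<lambda>y. \<Sum>x\<in>{x\<in>S. cls x = y}. c x"]) simp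
qed

lemma fspan_Pf:
  assumes "\<psi> \<in> fspan UM UD UB"
  shows "\<exists>S c. finite S \<and> S \<subseteq> linfM M d z \<and> \<psi> = Pf S c"
proof -
  obtain S0 c0 where S0: "finite S0" "S0 \<subseteq> UM" "\<psi> = (\<lambda>g. \<Sum>A\<in>S0. c0 A * fdelta UM UD UB A g)"
    using assms unfolding fspan_def by blast
  have inj: "inj_on rep S0"
  proof
    fix A B assume "A \<in> S0" "B \<in> S0" "rep A = rep B"
    then show "A = B" using uprod_rep S0(2) by (metis subsetD)
  qed
  have "Pf (rep ` S0) (\<lambda>x. c0 (cls x)) = \<psi>"
  proof
    fix g
    have "Pf (rep ` S0) (\<lambda>x. c0 (cls x)) g = (\<Sum>A\<in>S0. c0 (cls (rep A)) * fdelta UM UD UB (cls (rep A)) g)"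
      unfolding Pf_def by (rule sum.reindex[OF inj, unfolded comp_def])
    also have "\<dots> = \<psi> g" unfolding S0(3)
    proof (rule sum.cong[OF refl])
      fix A assume "A \<in> S0"
      then have "cls (rep A) = A" using uprod_rep S0(2) by auto
      then show "c0 (cls (rep A)) * fdelta UM UD UB (cls (rep A)) g = c0 A * fdelta UM UD UB A g" by simp
    qed
    finally show "Pf (rep ` S0) (\<lambda>x. c0 (cls x)) g = \<psi> g" .
  qed
  moreover have "rep ` S0 \<subseteq> linfM M d z" using uprod_rep S0(2) by blast
  ultimately show ?thesis using S0(1)
    by (intro exI[of _ "rep ` S0"] exI[of _ "\<lambda>x. c0 (cls x)"]) simp
qed

lemma merge2:
  assumes "finite S1" "S1 \<subseteq> linfM M d z" "finite S2" "S2 \<subseteq> linfM M d z"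
  shows "\<exists>S c. finite S \<and> S \<subseteq> linfM M d z \<and>
     (\<forall>i f. Jf S c i f = a * Jf S1 ca i f + b * Jf S2 cb i f) \<and>
     (\<forall>g. Pf S c g = a * Pf S1 ca g + b * Pf S2 cb g)"
proof -
  obtain S c where S: "finite S" "S \<subseteq> S1 \<union> S2"
    "\<forall>h. (\<Sum>x\<in>S. c x * h x) = a * (\<Sum>x\<in>S1. ca x * h x) + b * (\<Sum>x\<in>S2. cb x * h x)"
    using merge[OF assms(1) assms(3), where a=a and b=b and ca=ca and cb=cb] by (elim exE conjE) blast
  have "\<forall>i f. Jf S c i f = a * Jf S1 ca i f + b * Jf S2 cb i f"
    unfolding Jf_def using S(3) by simp
  moreover have "\<forall>g. Pf S c g = a * Pf S1 ca g + b * Pf S2 cb g"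
    unfolding Pf_def using S(3) by simp
  moreover have "S \<subseteq> linfM M d z" using S(2) assms by blast
  ultimately show ?thesis using S(1) by blast
qed

end

context ups begin

lemma ucomp:
  assumes J: "\<And>m. J m \<in> linfF M d z"
    and st: "\<And>m. eventually (\<lambda>i. dual_bound (M i) (d i) (z i) (\<lambda>f. J m i f - J (Suc m) i f) ((1/2)^m)) U"
  shows "\<exists>\<Phi>\<in>linfF M d z. \<forall>n. eventually (\<lambda>i. dual_bound (M i) (d i) (z i) (\<lambda>f. \<Phi> i f - J n i f) (2 * (1/2)^n)) U"
proof -
  define E where "E m = {i. \<forall>k<m. dual_bound (M i) (d i) (z i) (\<lambda>f. J k i f - J (Suc k) i f) ((1/2)^k)}" for m
  have evE: "eventually (\<lambda>i. i \<in> E m) U" for m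
  proof -
    have "eventually (\<lambda>i. \<forall>k\<in>{..<m}. dual_bound (M i) (d i) (z i) (\<lambda>f. J k i f - J (Suc k) i f) ((1/2)^k)) U"
      by (rule eventually_ball_finite) (use st in auto)
    then show ?thesis unfolding E_def by (rule eventually_mono) auto
  qed
  have E0: "i \<in> E 0" for i by (simp add: E_def)
  have Estep: "i \<in> E (Suc m) \<Longrightarrow> dual_bound (M i) (d i) (z i) (\<lambda>f. J m i f - J (Suc m) i f) ((1/2)^m)" for i m
    unfolding E_def by blast
  have Emono: "m \<le> m' \<Longrightarrow> i \<in> E m' \<Longrightarrow> i \<in> E m" for m m' i by (auto simp: E_def)
  define idx where "idx i m = (if \<exists>k. i \<notin> E (Suc k) then min m (LEAST k. i \<notin> E (Suc k)) else m)" for i m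
  define K where "K m i = J (idx i m) i" for m i
  have idxE: "i \<in> E n \<Longrightarrow> idx i n = n" for i n
  proof -
    assume iE: "i \<in> E n"
    show ?thesis
    proof (cases "\<exists>k. i \<notin> E (Suc k)")
      case True
      let ?N = "LEAST k. i \<notin> E (Suc k)"
      have "i \<notin> E (Suc ?N)" using True by (rule LeastI_ex)
      then have "\<not> Suc ?N \<le> n" using Emono iE by blast
      then show ?thesis using True unfolding idx_def by simp
    next
      case False then show ?thesis unfolding idx_def by simp
    qed
  qed
  have Kst: "dual_bound (M i) (d i) (z i) (\<lambda>f. K m i f - K (Suc m) i f) ((1/2)^m)" for m i
  proof (cases "\<exists>k. i \<notin> E (Suc k)")
    case True
    let ?N = "LEAST k. i \<notin> E (Suc k)"
    have iN: "i \<in> E ?N"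
    proof (cases ?N)
      case 0 then show ?thesis using E0 by simp
    next
      case (Suc N')
      then have "N' < ?N" by simp
      then have "\<not> i \<notin> E (Suc N')" by (rule not_less_Least)
      then show ?thesis using Suc by simp
    qed
    show ?thesis
    proof (cases "m < ?N")
      case True
      then have "idx i m = m" "idx i (Suc m) = Suc m" using \<open>\<exists>k. i \<notin> E (Suc k)\<close> unfolding idx_def by auto
      moreover have "i \<in> E (Suc m)" by (rule Emono[OF Suc_leI[OF True] iN])
      ultimately show ?thesis unfolding K_def using Estep[of i m] by simp
    next
      case False
      then have "idx i m = idx i (Suc m)" using \<open>\<exists>k. i \<notin> E (Suc k)\<close> unfolding idx_def by auto
      then show ?thesis unfolding K_def nnsp.db_iff[OF coordn] by simp
    qed
  next
    case False
    then have "idx i m = m" "idx i (Suc m) = Suc m" "i \<in> E (Suc m)" unfolding idx_def by auto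
    then show ?thesis unfolding K_def using Estep[of i m] by simp
  qed
  have Kfree: "K m i \<in> free (M i) (d i) (z i)" for m i
  proof -
    have "J (idx i m) \<in> linfF M d z" by (rule J)
    then show ?thesis unfolding K_def linfF_def by simp
  qed
  have exP: "\<exists>\<phi>\<in>free (M i) (d i) (z i). \<forall>n. dual_bound (M i) (d i) (z i) (\<lambda>f. \<phi> f - K n i f) (2 * (1/2)^n)" for i
    by (rule pnsp.free_complete[OF coord, where \<phi>="\<lambda>m. K m i"]) (use Kfree Kst in auto)
  define \<Phi> where "\<Phi> i = (SOME \<phi>. \<phi> \<in> free (M i) (d i) (z i) \<and> (\<forall>n. dual_bound (M i) (d i) (z i) (\<lambda>f. \<phi> f - K n i f) (2 * (1/2)^n)))" for i
  have \<Phi>: "\<Phi> i \<in> free (M i) (d i) (z i)" "\<And>n. dual_bound (M i) (d i) (z i) (\<lambda>f. \<Phi> i f - K n i f) (2 * (1/2)^n)" for i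
    using someI_ex[OF exP[of i, unfolded Bex_def]] unfolding \<Phi>_def by blast+
  have conv: "eventually (\<lambda>i. dual_bound (M i) (d i) (z i) (\<lambda>f. \<Phi> i f - J n i f) (2 * (1/2)^n)) U" for n
  proof (rule eventually_mono[OF evE[of n]])
    fix i assume "i \<in> E n"
    then have "idx i n = n" by (rule idxE)
    then show "dual_bound (M i) (d i) (z i) (\<lambda>f. \<Phi> i f - J n i f) (2 * (1/2)^n)"
      using \<Phi>(2)[of i n] unfolding K_def by simp
  qed
  obtain B where B: "\<And>i. dnorm (M i) (d i) (z i) (J 0 i) \<le> B" using J[of 0] unfolding linfF_def by blast
  have "dual_bound (M i) (d i) (z i) (J 0 i) B" for i
  proof -
    obtain e where "dual_bound (M i) (d i) (z i) (J 0 i) e" using pnsp.free_bdd[OF coord] J[of 0] unfolding linfF_def by blast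
    then show ?thesis using nnsp.db_le_dn[OF coordn] B by blast
  qed
  moreover have "K 0 i = J 0 i" for i unfolding K_def idx_def by simp
  ultimately have db2: "dual_bound (M i) (d i) (z i) (\<Phi> i) (2 * (1/2)^0 + B)" for i
  proof -
    have a: "dual_bound (M i) (d i) (z i) (\<lambda>f. \<Phi> i f - J 0 i f) (2 * (1/2)^0)"
      using \<Phi>(2)[of i 0] \<open>K 0 i = J 0 i\<close> by simp
    show ?thesis
      by (rule nnsp.db_pw[OF coordn a \<open>dual_bound (M i) (d i) (z i) (J 0 i) B\<close>]) auto
  qed
  have "\<Phi> \<in> linfF M d z" unfolding linfF_def
  proof (intro CollectI conjI allI exI)
    fix i
    show "\<Phi> i \<in> free (M i) (d i) (z i)" by (rule \<Phi>(1))
    show "dnorm (M i) (d i) (z i) (\<Phi> i) \<le> 2 * (1/2)^0 + B" by (rule nnsp.dn_le[OF coordn db2])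
  qed
  then show ?thesis using conv by blast
qed

end

lemma abs3: "\<bar>(u::real) - v - w\<bar> \<le> \<bar>u\<bar> + \<bar>v\<bar> + \<bar>w\<bar>" by linarith
lemma abs2: "\<bar>(u::real) - v\<bar> \<le> \<bar>u\<bar> + \<bar>v\<bar>" by linarith
lemma abs2p: "\<bar>(u::real) + v\<bar> \<le> \<bar>u\<bar> + \<bar>v\<bar>" by linarith

context ups begin

lemma ISO_un: "finite S \<Longrightarrow> S \<subseteq> linfM M d z \<Longrightarrow> unorm U M d z (Jf S c) = dnorm UM UD UB (Pf S c)"
  using tendsto_unique[OF Ubot un_t[OF Jf_bfam] ISO(1)] by blast

lemma ISO_lt:
  assumes S: "finite S" "S \<subseteq> linfM M d z" and lt: "dnorm UM UD UB (Pf S c) < e"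
  shows "eventually (\<lambda>i. dual_bound (M i) (d i) (z i) (Jf S c i) e) U"
proof -
  have "eventually (\<lambda>i. dnorm (M i) (d i) (z i) (Jf S c i) < e) U"
    by (rule order_tendstoD(2)[OF ISO(1)[OF S] lt])
  then show ?thesis
    by (rule eventually_mono) (use nnsp.db_le_dn[OF coordn Jf_bd[OF S]] in force)
qed

lemma ISO_le:
  assumes S: "finite S" "S \<subseteq> linfM M d z" and db: "dual_bound UM UD UB (Pf S c) e" and \<epsilon>: "0 < \<epsilon>"
  shows "eventually (\<lambda>i. dual_bound (M i) (d i) (z i) (Jf S c i) (e + \<epsilon>)) U"
  using ISO_lt[OF S] UP.dn_le[OF db] \<epsilon> by simp

definition Rel :: "((('i \<Rightarrow> 'a) set \<Rightarrow> real) \<Rightarrow> real) \<Rightarrow> ('i \<Rightarrow> ('a \<Rightarrow> real) \<Rightarrow> real) \<Rightarrow> bool" where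
  "Rel \<phi> \<Phi> \<longleftrightarrow> \<Phi> \<in> linfF M d z \<and> (\<forall>\<epsilon>>0. \<exists>S c. finite S \<and> S \<subseteq> linfM M d z \<and>
     dual_bound UM UD UB (\<lambda>g. \<phi> g - Pf S c g) \<epsilon> \<and>
     eventually (\<lambda>i. dual_bound (M i) (d i) (z i) (\<lambda>f. \<Phi> i f - Jf S c i f) \<epsilon>) U)"

lemma Rel_ex:
  assumes \<phi>: "\<phi> \<in> free UM UD UB"
  shows "\<exists>\<Phi>. Rel \<phi> \<Phi>"
proof -
  have "\<exists>S c. finite S \<and> S \<subseteq> linfM M d z \<and> dual_bound UM UD UB (\<lambda>g. \<phi> g - Pf S c g) ((1/2)^(n+2))" for n
  proof -
    have "\<forall>e>0. \<exists>\<psi>\<in>fspan UM UD UB. dual_bound UM UD UB (\<lambda>f. \<phi> f - \<psi> f) e"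
      using \<phi> unfolding free_def by blast
    then obtain \<psi> where p: "\<psi> \<in> fspan UM UD UB" "dual_bound UM UD UB (\<lambda>f. \<phi> f - \<psi> f) ((1/2)^(n+2))"
      by (meson zero_less_divide_1_iff zero_less_numeral zero_less_power)
    obtain S c where "finite S" "S \<subseteq> linfM M d z" "\<psi> = Pf S c" using fspan_Pf[OF p(1)] by blast
    then show ?thesis using p(2) by blast
  qed
  then obtain Sn cn where H: "\<And>n. finite (Sn n)" "\<And>n. Sn n \<subseteq> linfM M d z"
    "\<And>n. dual_bound UM UD UB (\<lambda>g. \<phi> g - Pf (Sn n) (cn n) g) ((1/2)^(n+2))"
    by metis
  define J where "J n = Jf (Sn n) (cn n)" for n
  have JL: "J n \<in> linfF M d z" for n unfolding J_def by (rule Jf_linfF[OF H(1) H(2)])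
  have st: "eventually (\<lambda>i. dual_bound (M i) (d i) (z i) (\<lambda>f. J n i f - J (Suc n) i f) ((1/2)^n)) U" for n
  proof -
    obtain K cK where K: "finite K" "K \<subseteq> linfM M d z"
      "\<forall>i f. Jf K cK i f = 1 * Jf (Sn n) (cn n) i f + (-1) * Jf (Sn (Suc n)) (cn (Suc n)) i f"
      "\<forall>g. Pf K cK g = 1 * Pf (Sn n) (cn n) g + (-1) * Pf (Sn (Suc n)) (cn (Suc n)) g"
      using merge2[OF H(1)[of n] H(2)[of n] H(1)[of "Suc n"] H(2)[of "Suc n"], where a=1 and b="-1" and ca="cn n" and cb="cn (Suc n)"] by blast
    have "dual_bound UM UD UB (Pf K cK) ((1/2)^(Suc n+2) + (1/2)^(n+2))"
    proof (rule UP.db_pw[OF H(3)[of "Suc n"] H(3)[of n]], intro ballI)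
      fix g
      have "Pf K cK g = (\<phi> g - Pf (Sn (Suc n)) (cn (Suc n)) g) - (\<phi> g - Pf (Sn n) (cn n) g)"
        using K(4) by simp
      then show "\<bar>Pf K cK g\<bar> \<le> \<bar>\<phi> g - Pf (Sn (Suc n)) (cn (Suc n)) g\<bar> + \<bar>\<phi> g - Pf (Sn n) (cn n) g\<bar>"
        using abs2 by simp
    qed
    then have "eventually (\<lambda>i. dual_bound (M i) (d i) (z i) (Jf K cK i)
        ((1/2)^(Suc n+2) + (1/2)^(n+2) + (1/2)^(n+2))) U"
      by (rule ISO_le[OF K(1) K(2)]) simp
    moreover have "(1/2::real)^(Suc n+2) + (1/2)^(n+2) + (1/2)^(n+2) \<le> (1/2)^n"
      by (simp add: power_add)
    moreover have "Jf K cK i = (\<lambda>f. J n i f - J (Suc n) i f)" for i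
      using K(3) unfolding J_def by auto
    ultimately show ?thesis
      by (auto elim!: eventually_mono intro: nnsp.db_mono[OF coordn])
  qed
  obtain \<Phi> where \<Phi>: "\<Phi> \<in> linfF M d z"
    "\<And>n. eventually (\<lambda>i. dual_bound (M i) (d i) (z i) (\<lambda>f. \<Phi> i f - J n i f) (2 * (1/2)^n)) U"
    using ucomp[OF JL st] by blast
  have "Rel \<phi> \<Phi>" unfolding Rel_def
  proof (intro conjI allI impI)
    show "\<Phi> \<in> linfF M d z" by (rule \<Phi>(1))
    fix \<epsilon> :: real assume \<epsilon>: "0 < \<epsilon>"
    obtain n where n: "(1/2::real)^n < \<epsilon> / 2" using real_arch_pow_inv[of "\<epsilon>/2" "1/2"] \<epsilon> by auto
    have a: "dual_bound UM UD UB (\<lambda>g. \<phi> g - Pf (Sn n) (cn n) g) \<epsilon>"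
    proof (rule UP.db_mono[OF H(3)])
      have "(1/2::real)^(n+2) \<le> (1/2)^n" by (simp add: power_add)
      then show "(1/2::real)^(n+2) \<le> \<epsilon>" using n \<epsilon> by linarith
    qed
    have b: "eventually (\<lambda>i. dual_bound (M i) (d i) (z i) (\<lambda>f. \<Phi> i f - Jf (Sn n) (cn n) i f) \<epsilon>) U"
      using \<Phi>(2)[of n] unfolding J_def
      by (rule eventually_mono) (rule nnsp.db_mono[OF coordn], assumption, use n \<epsilon> in linarith)
    show "\<exists>S c. finite S \<and> S \<subseteq> linfM M d z \<and> dual_bound UM UD UB (\<lambda>g. \<phi> g - Pf S c g) \<epsilon> \<and>
      eventually (\<lambda>i. dual_bound (M i) (d i) (z i) (\<lambda>f. \<Phi> i f - Jf S c i f) \<epsilon>) U"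
      using H(1) H(2) a b by blast
  qed
  then show ?thesis by blast
qed

definition Tm where "Tm \<phi> = (SOME \<Phi>. Rel \<phi> \<Phi>)"

lemma Rel_T: "\<phi> \<in> free UM UD UB \<Longrightarrow> Rel \<phi> (Tm \<phi>)"
  unfolding Tm_def using Rel_ex someI_ex by metis

end

lemma abs3b: "\<bar>(u::real) + v - w\<bar> \<le> \<bar>u\<bar> + \<bar>v\<bar> + \<bar>w\<bar>" by linarith

context ups begin

lemma P1: "\<phi> \<in> free UM UD UB \<Longrightarrow> Tm \<phi> \<in> linfF M d z"
  using Rel_T[unfolded Rel_def] by (rule conjunct1)

lemma Rel_get:
  assumes R: "Rel \<phi> \<Phi>" and \<epsilon>: "0 < \<epsilon>"
  obtains S c where "finite S" "S \<subseteq> linfM M d z" "dual_bound UM UD UB (\<lambda>g. \<phi> g - Pf S c g) \<epsilon>"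
    "eventually (\<lambda>i. dual_bound (M i) (d i) (z i) (\<lambda>f. \<Phi> i f - Jf S c i f) \<epsilon>) U"
proof -
  have "\<forall>\<epsilon>>0. \<exists>S c. finite S \<and> S \<subseteq> linfM M d z \<and>
     dual_bound UM UD UB (\<lambda>g. \<phi> g - Pf S c g) \<epsilon> \<and>
     eventually (\<lambda>i. dual_bound (M i) (d i) (z i) (\<lambda>f. \<Phi> i f - Jf S c i f) \<epsilon>) U"
    using R unfolding Rel_def by (rule conjunct2)
  note H = this[rule_format, OF \<epsilon>]
  then show ?thesis using that by (elim exE conjE)
qed

lemma P3:
  assumes \<phi>: "\<phi> \<in> free UM UD UB"
  shows "unorm U M d z (Tm \<phi>) = dnorm UM UD UB \<phi>"
proof -
  obtain e0 where e0: "dual_bound UM UD UB \<phi> e0" using UP.free_bdd[OF \<phi>] by blast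
  have key: "\<bar>unorm U M d z (Tm \<phi>) - dnorm UM UD UB \<phi>\<bar> \<le> 2 * \<epsilon>" if \<epsilon>: "0 < \<epsilon>" for \<epsilon>
  proof -
    obtain S c where S: "finite S" "S \<subseteq> linfM M d z"
      and a: "dual_bound UM UD UB (\<lambda>g. \<phi> g - Pf S c g) \<epsilon>"
      and b: "eventually (\<lambda>i. dual_bound (M i) (d i) (z i) (\<lambda>f. Tm \<phi> i f - Jf S c i f) \<epsilon>) U"
      by (rule Rel_get[OF Rel_T[OF \<phi>] \<epsilon>])
    have 1: "\<bar>dnorm UM UD UB \<phi> - dnorm UM UD UB (Pf S c)\<bar> \<le> \<epsilon>" by (rule UP.dn_lip[OF e0 a])
    have 2: "\<bar>unorm U M d z (Tm \<phi>) - unorm U M d z (Jf S c)\<bar> \<le> \<epsilon>"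
      by (rule un_close[OF linfF_bfam[OF P1[OF \<phi>]] Jf_bfam[OF S] b])
    show ?thesis using 1 2 ISO_un[OF S, of c] by linarith
  qed
  show ?thesis
  proof (rule ccontr)
    assume ne: "unorm U M d z (Tm \<phi>) \<noteq> dnorm UM UD UB \<phi>"
    define D where "D = \<bar>unorm U M d z (Tm \<phi>) - dnorm UM UD UB \<phi>\<bar>"
    have D0: "0 < D" using ne unfolding D_def by simp
    then have "D \<le> 2 * (D / 4)" using key[of "D / 4"] unfolding D_def by simp
    then show False using D0 by linarith
  qed
qed

lemma P2:
  assumes \<phi>: "\<phi> \<in> free UM UD UB" and \<psi>: "\<psi> \<in> free UM UD UB"
  shows "unorm U M d z (\<lambda>i f. Tm (\<lambda>g. a * \<phi> g + b * \<psi> g) i f - (a * Tm \<phi> i f + b * Tm \<psi> i f)) = 0"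
proof -
  let ?\<chi> = "\<lambda>g. a * \<phi> g + b * \<psi> g"
  have \<chi>: "?\<chi> \<in> free UM UD UB" by (rule UP.free_lin[OF \<phi> \<psi>])
  let ?X = "\<lambda>i f. Tm ?\<chi> i f - (a * Tm \<phi> i f + b * Tm \<psi> i f)"
  have bY: "bfam (\<lambda>i f. a * Tm \<phi> i f + b * Tm \<psi> i f)"
  proof (rule bfam_pw[OF linfF_bfam[OF P1[OF \<phi>]] linfF_bfam[OF P1[OF \<psi>]], where a=a and b=b])
    fix i f
    show "\<bar>a * Tm \<phi> i f + b * Tm \<psi> i f\<bar> \<le> \<bar>a\<bar> * \<bar>Tm \<phi> i f\<bar> + \<bar>b\<bar> * \<bar>Tm \<psi> i f\<bar>"
      using abs2p[of "a * Tm \<phi> i f" "b * Tm \<psi> i f"] by (simp add: abs_mult)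
  qed
  have bX: "bfam ?X" by (rule bfam_diff[OF linfF_bfam[OF P1[OF \<chi>]] bY])
  define C where "C = 1 + \<bar>a\<bar> + \<bar>b\<bar>"
  have C: "0 < C" unfolding C_def by simp
  have key: "unorm U M d z ?X \<le> (2 * C + 1) * \<epsilon>" if \<epsilon>: "0 < \<epsilon>" for \<epsilon>
  proof -
    obtain S3 c3 where S3: "finite S3" "S3 \<subseteq> linfM M d z"
      and r3a: "dual_bound UM UD UB (\<lambda>g. ?\<chi> g - Pf S3 c3 g) \<epsilon>"
      and r3b: "eventually (\<lambda>i. dual_bound (M i) (d i) (z i) (\<lambda>f. Tm ?\<chi> i f - Jf S3 c3 i f) \<epsilon>) U"
      by (rule Rel_get[OF Rel_T[OF \<chi>] \<epsilon>])
    obtain S1 c1 where S1: "finite S1" "S1 \<subseteq> linfM M d z"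
      and r1a: "dual_bound UM UD UB (\<lambda>g. \<phi> g - Pf S1 c1 g) \<epsilon>"
      and r1b: "eventually (\<lambda>i. dual_bound (M i) (d i) (z i) (\<lambda>f. Tm \<phi> i f - Jf S1 c1 i f) \<epsilon>) U"
      by (rule Rel_get[OF Rel_T[OF \<phi>] \<epsilon>])
    obtain S2 c2 where S2: "finite S2" "S2 \<subseteq> linfM M d z"
      and r2a: "dual_bound UM UD UB (\<lambda>g. \<psi> g - Pf S2 c2 g) \<epsilon>"
      and r2b: "eventually (\<lambda>i. dual_bound (M i) (d i) (z i) (\<lambda>f. Tm \<psi> i f - Jf S2 c2 i f) \<epsilon>) U"
      by (rule Rel_get[OF Rel_T[OF \<psi>] \<epsilon>])
    obtain S12 c12 where S12: "finite S12" "S12 \<subseteq> linfM M d z"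
      "\<forall>i f. Jf S12 c12 i f = a * Jf S1 c1 i f + b * Jf S2 c2 i f"
      "\<forall>g. Pf S12 c12 g = a * Pf S1 c1 g + b * Pf S2 c2 g"
      using merge2[OF S1 S2, where a=a and b=b and ca=c1 and cb=c2] by blast
    obtain K cK where K: "finite K" "K \<subseteq> linfM M d z"
      "\<forall>i f. Jf K cK i f = 1 * Jf S3 c3 i f + (-1) * Jf S12 c12 i f"
      "\<forall>g. Pf K cK g = 1 * Pf S3 c3 g + (-1) * Pf S12 c12 g"
      using merge2[OF S3 S12(1,2), where a=1 and b="-1" and ca=c3 and cb=c12] by blast
    have dbPK: "dual_bound UM UD UB (Pf K cK) (\<epsilon> + \<bar>a\<bar> * \<epsilon> + \<bar>b\<bar> * \<epsilon>)"
    proof (rule UP.db_pw3[OF r3a UP.db_scale[OF r1a, where c=a] UP.db_scale[OF r2a, where c=b]])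
      show "\<forall>f\<in>ball1 UM UD UB. \<bar>a * (\<phi> f - Pf S1 c1 f)\<bar> \<le> \<bar>a\<bar> * \<bar>\<phi> f - Pf S1 c1 f\<bar>"
        by (simp add: abs_mult)
      show "\<forall>f\<in>ball1 UM UD UB. \<bar>b * (\<psi> f - Pf S2 c2 f)\<bar> \<le> \<bar>b\<bar> * \<bar>\<psi> f - Pf S2 c2 f\<bar>"
        by (simp add: abs_mult)
      show "\<forall>g\<in>ball1 UM UD UB. \<bar>Pf K cK g\<bar> \<le> \<bar>?\<chi> g - Pf S3 c3 g\<bar> + \<bar>a * (\<phi> g - Pf S1 c1 g)\<bar> + \<bar>b * (\<psi> g - Pf S2 c2 g)\<bar>"
      proof
        fix g
        have "Pf K cK g = a * (\<phi> g - Pf S1 c1 g) + b * (\<psi> g - Pf S2 c2 g) - (?\<chi> g - Pf S3 c3 g)"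
          using K(4) S12(4) by (simp add: algebra_simps)
        then show "\<bar>Pf K cK g\<bar> \<le> \<bar>?\<chi> g - Pf S3 c3 g\<bar> + \<bar>a * (\<phi> g - Pf S1 c1 g)\<bar> + \<bar>b * (\<psi> g - Pf S2 c2 g)\<bar>"
          using abs3b[of "a * (\<phi> g - Pf S1 c1 g)" "b * (\<psi> g - Pf S2 c2 g)" "?\<chi> g - Pf S3 c3 g"] by linarith
      qed
    qed
    have evK: "eventually (\<lambda>i. dual_bound (M i) (d i) (z i) (Jf K cK i) ((\<epsilon> + \<bar>a\<bar> * \<epsilon> + \<bar>b\<bar> * \<epsilon>) + \<epsilon>)) U"
      by (rule ISO_le[OF K(1,2) dbPK \<epsilon>])
    have "eventually (\<lambda>i. dual_bound (M i) (d i) (z i) (?X i)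
        ((\<epsilon> + \<bar>a\<bar> * \<epsilon> + \<bar>b\<bar> * \<epsilon>) + ((\<epsilon> + \<bar>a\<bar> * \<epsilon> + \<bar>b\<bar> * \<epsilon>) + \<epsilon>))) U"
      using r3b r1b r2b evK
    proof eventually_elim
      case (elim i)
      note cn = coordn[of i]
      have W: "dual_bound (M i) (d i) (z i)
          (\<lambda>f. (Tm ?\<chi> i f - Jf S3 c3 i f) - a * (Tm \<phi> i f - Jf S1 c1 i f) - b * (Tm \<psi> i f - Jf S2 c2 i f))
          (\<epsilon> + \<bar>a\<bar> * \<epsilon> + \<bar>b\<bar> * \<epsilon>)"
      proof (rule nnsp.db_pw3[OF cn elim(1) nnsp.db_scale[OF cn elim(2), where c=a] nnsp.db_scale[OF cn elim(3), where c=b]])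
        show "\<forall>f\<in>ball1 (M i) (d i) (z i). \<bar>a * (Tm \<phi> i f - Jf S1 c1 i f)\<bar> \<le> \<bar>a\<bar> * \<bar>Tm \<phi> i f - Jf S1 c1 i f\<bar>"
          by (simp add: abs_mult)
        show "\<forall>f\<in>ball1 (M i) (d i) (z i). \<bar>b * (Tm \<psi> i f - Jf S2 c2 i f)\<bar> \<le> \<bar>b\<bar> * \<bar>Tm \<psi> i f - Jf S2 c2 i f\<bar>"
          by (simp add: abs_mult)
        show "\<forall>f\<in>ball1 (M i) (d i) (z i). \<bar>(Tm ?\<chi> i f - Jf S3 c3 i f) - a * (Tm \<phi> i f - Jf S1 c1 i f) - b * (Tm \<psi> i f - Jf S2 c2 i f)\<bar>
            \<le> \<bar>Tm ?\<chi> i f - Jf S3 c3 i f\<bar> + \<bar>a * (Tm \<phi> i f - Jf S1 c1 i f)\<bar> + \<bar>b * (Tm \<psi> i f - Jf S2 c2 i f)\<bar>"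
          using abs3 by blast
      qed
      show ?case
      proof (rule nnsp.db_pw[OF cn W elim(4)], intro ballI)
        fix f
        have "?X i f = ((Tm ?\<chi> i f - Jf S3 c3 i f) - a * (Tm \<phi> i f - Jf S1 c1 i f) - b * (Tm \<psi> i f - Jf S2 c2 i f)) + Jf K cK i f"
          using K(3) S12(3) by (simp add: algebra_simps)
        then show "\<bar>?X i f\<bar> \<le> \<bar>(Tm ?\<chi> i f - Jf S3 c3 i f) - a * (Tm \<phi> i f - Jf S1 c1 i f) - b * (Tm \<psi> i f - Jf S2 c2 i f)\<bar> + \<bar>Jf K cK i f\<bar>"
          using abs2p by simp
      qed
    qed
    then have "unorm U M d z ?X \<le> (\<epsilon> + \<bar>a\<bar> * \<epsilon> + \<bar>b\<bar> * \<epsilon>) + ((\<epsilon> + \<bar>a\<bar> * \<epsilon> + \<bar>b\<bar> * \<epsilon>) + \<epsilon>)"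
      by (rule un_le[OF bX])
    also have "\<dots> = (2 * C + 1) * \<epsilon>" unfolding C_def by (simp add: algebra_simps)
    finally show ?thesis .
  qed
  have "unorm U M d z ?X \<le> 0"
  proof (rule field_le_epsilon)
    fix e :: real assume e: "0 < e"
    have "unorm U M d z ?X \<le> (2 * C + 1) * (e / (2 * C + 1))" using key[of "e / (2 * C + 1)"] e C by simp
    then show "unorm U M d z ?X \<le> 0 + e" using C by simp
  qed
  then show ?thesis using un_nn[OF bX] by linarith
qed

end

context ups begin

lemma span_iff: "\<Phi> \<in> udelta_span_closure U M d z \<longleftrightarrow> \<Phi> \<in> linfF M d z \<and>
   (\<forall>e>0. \<exists>S c. finite S \<and> S \<subseteq> linfM M d z \<and> unorm U M d z (\<lambda>i f. \<Phi> i f - Jf S c i f) \<le> e)"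
  unfolding udelta_span_closure_def Jf_def by simp

lemma P4a:
  assumes \<Phi>: "\<Phi> \<in> linfF M d z" and \<phi>: "\<phi> \<in> free UM UD UB"
    and z0: "unorm U M d z (\<lambda>i f. \<Phi> i f - Tm \<phi> i f) = 0"
  shows "\<Phi> \<in> udelta_span_closure U M d z"
  unfolding span_iff
proof (intro conjI allI impI)
  show "\<Phi> \<in> linfF M d z" by (rule \<Phi>)
  fix e :: real assume e: "0 < e"
  obtain S c where S: "finite S" "S \<subseteq> linfM M d z"
    and rb: "eventually (\<lambda>i. dual_bound (M i) (d i) (z i) (\<lambda>f. Tm \<phi> i f - Jf S c i f) (e/2)) U"
    by (rule Rel_get[OF Rel_T[OF \<phi>] half_gt_zero[OF e]])
  have bd: "bfam (\<lambda>i f. \<Phi> i f - Tm \<phi> i f)" by (rule bfam_diff[OF linfF_bfam[OF \<Phi>] linfF_bfam[OF P1[OF \<phi>]]])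
  have ev1: "eventually (\<lambda>i. dual_bound (M i) (d i) (z i) (\<lambda>f. \<Phi> i f - Tm \<phi> i f) (e/2)) U"
    by (rule un_lt[OF bd]) (use z0 e in simp)
  have "eventually (\<lambda>i. dual_bound (M i) (d i) (z i) (\<lambda>f. \<Phi> i f - Jf S c i f) (e/2 + e/2)) U"
    using ev1 rb
  proof eventually_elim
    case (elim i)
    show ?case
    proof (rule nnsp.db_pw[OF coordn elim(1) elim(2)], intro ballI)
      fix f
      show "\<bar>\<Phi> i f - Jf S c i f\<bar> \<le> \<bar>\<Phi> i f - Tm \<phi> i f\<bar> + \<bar>Tm \<phi> i f - Jf S c i f\<bar>" by linarith
    qed
  qed
  then have "unorm U M d z (\<lambda>i f. \<Phi> i f - Jf S c i f) \<le> e/2 + e/2"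
    by (rule un_le[OF bfam_diff[OF linfF_bfam[OF \<Phi>] Jf_bfam[OF S]]])
  then show "\<exists>S c. finite S \<and> S \<subseteq> linfM M d z \<and> unorm U M d z (\<lambda>i f. \<Phi> i f - Jf S c i f) \<le> e"
    using S by auto
qed

lemma P4b:
  assumes sp: "\<Phi> \<in> udelta_span_closure U M d z"
  shows "\<exists>\<phi>\<in>free UM UD UB. unorm U M d z (\<lambda>i f. \<Phi> i f - Tm \<phi> i f) = 0"
proof -
  have \<Phi>: "\<Phi> \<in> linfF M d z"
    and spe: "\<forall>e>0. \<exists>S c. finite S \<and> S \<subseteq> linfM M d z \<and> unorm U M d z (\<lambda>i f. \<Phi> i f - Jf S c i f) \<le> e"
    using sp unfolding span_iff by auto
  have "\<exists>S c. finite S \<and> S \<subseteq> linfM M d z \<and> unorm U M d z (\<lambda>i f. \<Phi> i f - Jf S c i f) \<le> (1/2)^(n+3)" for n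
    using spe[rule_format, of "(1/2)^(n+3)"] by simp
  then obtain Sn cn where H: "\<And>n. finite (Sn n)" "\<And>n. Sn n \<subseteq> linfM M d z"
    "\<And>n. unorm U M d z (\<lambda>i f. \<Phi> i f - Jf (Sn n) (cn n) i f) \<le> (1/2)^(n+3)"
    by (metis (no_types))
  have evn: "eventually (\<lambda>i. dual_bound (M i) (d i) (z i) (\<lambda>f. \<Phi> i f - Jf (Sn n) (cn n) i f) ((1/2)^(n+2))) U" for n
  proof (rule un_lt[OF bfam_diff[OF linfF_bfam[OF \<Phi>] Jf_bfam[OF H(1) H(2)]]])
    have "(1/2::real)^(n+3) < (1/2)^(n+2)" by (rule power_strict_decreasing) auto
    then show "unorm U M d z (\<lambda>i f. \<Phi> i f - Jf (Sn n) (cn n) i f) < (1/2)^(n+2)"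
      using H(3)[of n] by linarith
  qed
  define \<psi> where "\<psi> n = Pf (Sn n) (cn n)" for n
  have \<psi>free: "\<psi> n \<in> free UM UD UB" for n
    unfolding \<psi>_def by (rule UP.fspan_free[OF Pf_fspan[OF H(1) H(2)]])
  have step: "dual_bound UM UD UB (\<lambda>g. \<psi> n g - \<psi> (Suc n) g) ((1/2)^n)" for n
  proof -
    obtain K cK where K: "finite K" "K \<subseteq> linfM M d z"
      "\<forall>i f. Jf K cK i f = 1 * Jf (Sn n) (cn n) i f + (-1) * Jf (Sn (Suc n)) (cn (Suc n)) i f"
      "\<forall>g. Pf K cK g = 1 * Pf (Sn n) (cn n) g + (-1) * Pf (Sn (Suc n)) (cn (Suc n)) g"
      using merge2[OF H(1)[of n] H(2)[of n] H(1)[of "Suc n"] H(2)[of "Suc n"], where a=1 and b="-1" and ca="cn n" and cb="cn (Suc n)"] by blast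
    have "eventually (\<lambda>i. dual_bound (M i) (d i) (z i) (Jf K cK i) ((1/2)^(Suc n+2) + (1/2)^(n+2))) U"
      using evn[of "Suc n"] evn[of n]
    proof eventually_elim
      case (elim i)
      show ?case
      proof (rule nnsp.db_pw[OF coordn elim(1) elim(2)], intro ballI)
        fix f
        have "Jf K cK i f = (\<Phi> i f - Jf (Sn (Suc n)) (cn (Suc n)) i f) - (\<Phi> i f - Jf (Sn n) (cn n) i f)"
          using K(3) by simp
        then show "\<bar>Jf K cK i f\<bar> \<le> \<bar>\<Phi> i f - Jf (Sn (Suc n)) (cn (Suc n)) i f\<bar> + \<bar>\<Phi> i f - Jf (Sn n) (cn n) i f\<bar>"
          by linarith
      qed
    qed
    then have "unorm U M d z (Jf K cK) \<le> (1/2)^(Suc n+2) + (1/2)^(n+2)"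
      by (rule un_le[OF Jf_bfam[OF K(1,2)]])
    then have "dnorm UM UD UB (Pf K cK) \<le> (1/2)^(Suc n+2) + (1/2)^(n+2)" using ISO_un[OF K(1,2)] by simp
    then have "dual_bound UM UD UB (Pf K cK) ((1/2)^(Suc n+2) + (1/2)^(n+2))"
      by (rule UP.db_le_dn[OF ISO(2)[OF K(1,2)]])
    moreover have "Pf K cK = (\<lambda>g. \<psi> n g - \<psi> (Suc n) g)" using K(4) unfolding \<psi>_def by auto
    moreover have "(1/2::real)^(Suc n+2) + (1/2)^(n+2) \<le> (1/2)^n" by (simp add: power_add)
    ultimately show ?thesis by (metis UP.db_mono)
  qed
  obtain \<phi> where \<phi>: "\<phi> \<in> free UM UD UB" "\<And>n. dual_bound UM UD UB (\<lambda>g. \<phi> g - \<psi> n g) (2 * (1/2)^n)"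
    using UP.free_complete[where \<phi>=\<psi>, OF \<psi>free step] by blast
  have bX: "bfam (\<lambda>i f. \<Phi> i f - Tm \<phi> i f)" by (rule bfam_diff[OF linfF_bfam[OF \<Phi>] linfF_bfam[OF P1[OF \<phi>(1)]]])
  have "unorm U M d z (\<lambda>i f. \<Phi> i f - Tm \<phi> i f) \<le> 0"
  proof (rule field_le_epsilon)
    fix e :: real assume e: "0 < e"
    define \<epsilon> where "\<epsilon> = e / 6"
    have \<epsilon>: "0 < \<epsilon>" using e \<epsilon>_def by simp
    obtain n where n: "(1/2::real)^n < \<epsilon>" using real_arch_pow_inv[of \<epsilon> "1/2"] \<epsilon> by auto
    obtain S c where S: "finite S" "S \<subseteq> linfM M d z"
      and ra: "dual_bound UM UD UB (\<lambda>g. \<phi> g - Pf S c g) \<epsilon>"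
      and rb: "eventually (\<lambda>i. dual_bound (M i) (d i) (z i) (\<lambda>f. Tm \<phi> i f - Jf S c i f) \<epsilon>) U"
      by (rule Rel_get[OF Rel_T[OF \<phi>(1)] \<epsilon>])
    obtain K cK where K: "finite K" "K \<subseteq> linfM M d z"
      "\<forall>i f. Jf K cK i f = 1 * Jf (Sn n) (cn n) i f + (-1) * Jf S c i f"
      "\<forall>g. Pf K cK g = 1 * Pf (Sn n) (cn n) g + (-1) * Pf S c g"
      using merge2[OF H(1)[of n] H(2)[of n] S, where a=1 and b="-1" and ca="cn n" and cb=c] by blast
    have dbK: "dual_bound UM UD UB (Pf K cK) (2 * (1/2)^n + \<epsilon>)"
    proof (rule UP.db_pw[OF \<phi>(2)[of n] ra], intro ballI)
      fix g
      have "Pf K cK g = (\<phi> g - Pf S c g) - (\<phi> g - \<psi> n g)" using K(4) unfolding \<psi>_def by simp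
      then show "\<bar>Pf K cK g\<bar> \<le> \<bar>\<phi> g - \<psi> n g\<bar> + \<bar>\<phi> g - Pf S c g\<bar>" by linarith
    qed
    have evK: "eventually (\<lambda>i. dual_bound (M i) (d i) (z i) (Jf K cK i) ((2 * (1/2)^n + \<epsilon>) + \<epsilon>)) U"
      by (rule ISO_le[OF K(1,2) dbK \<epsilon>])
    have "eventually (\<lambda>i. dual_bound (M i) (d i) (z i) (\<lambda>f. \<Phi> i f - Tm \<phi> i f)
        ((1/2)^(n+2) + ((2 * (1/2)^n + \<epsilon>) + \<epsilon>) + \<epsilon>)) U"
      using evn[of n] evK rb
    proof eventually_elim
      case (elim i)
      show ?case
      proof (rule nnsp.db_pw3[OF coordn elim(1) elim(2) elim(3)], intro ballI)
        fix f
        have "\<Phi> i f - Tm \<phi> i f = (\<Phi> i f - Jf (Sn n) (cn n) i f) + Jf K cK i f - (Tm \<phi> i f - Jf S c i f)"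
          using K(3) by simp
        then show "\<bar>\<Phi> i f - Tm \<phi> i f\<bar> \<le> \<bar>\<Phi> i f - Jf (Sn n) (cn n) i f\<bar> + \<bar>Jf K cK i f\<bar> + \<bar>Tm \<phi> i f - Jf S c i f\<bar>"
          by linarith
      qed
    qed
    then have "unorm U M d z (\<lambda>i f. \<Phi> i f - Tm \<phi> i f) \<le> (1/2)^(n+2) + ((2 * (1/2)^n + \<epsilon>) + \<epsilon>) + \<epsilon>"
      by (rule un_le[OF bX])
    moreover have "(1/2::real)^(n+2) \<le> (1/2)^n" by (simp add: power_add)
    ultimately show "unorm U M d z (\<lambda>i f. \<Phi> i f - Tm \<phi> i f) \<le> 0 + e"
      using n \<epsilon>_def by linarith
  qed
  then have "unorm U M d z (\<lambda>i f. \<Phi> i f - Tm \<phi> i f) = 0" using un_nn[OF bX] by linarith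
  then show ?thesis using \<phi>(1) by blast
qed

end

theorem theorem3p4:
  fixes U :: "'i filter" and M :: "'i \<Rightarrow> 'a set"
    and d :: "'i \<Rightarrow> 'a \<Rightarrow> 'a \<Rightarrow> real" and z :: "'i \<Rightarrow> 'a"
  assumes "is_ultrafilter U"
    and "\<forall>i. Metric_space (M i) (d i)"
    and "\<forall>i. z i \<in> M i"
  shows "\<exists>T :: ((('i \<Rightarrow> 'a) set \<Rightarrow> real) \<Rightarrow> real) \<Rightarrow> ('i \<Rightarrow> ('a \<Rightarrow> real) \<Rightarrow> real).
    (\<forall>\<phi>\<in>free (uprod U M d z) (uprod_dist U d) (uprod_base U M d z).
        T \<phi> \<in> linfF M d z) \<and>
    (\<forall>\<phi>\<in>free (uprod U M d z) (uprod_dist U d) (uprod_base U M d z).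
     \<forall>\<psi>\<in>free (uprod U M d z) (uprod_dist U d) (uprod_base U M d z). \<forall>a b.
        unorm U M d z (\<lambda>i f. T (\<lambda>g. a * \<phi> g + b * \<psi> g) i f - (a * T \<phi> i f + b * T \<psi> i f)) = 0) \<and>
    (\<forall>\<phi>\<in>free (uprod U M d z) (uprod_dist U d) (uprod_base U M d z).
        unorm U M d z (T \<phi>) = dnorm (uprod U M d z) (uprod_dist U d) (uprod_base U M d z) \<phi>) \<and>
    (\<forall>\<Phi>\<in>linfF M d z. \<Phi> \<in> udelta_span_closure U M d z \<longleftrightarrow>
       (\<exists>\<phi>\<in>free (uprod U M d z) (uprod_dist U d) (uprod_base U M d z).
          unorm U M d z (\<lambda>i f. \<Phi> i f - T \<phi> i f) = 0))"
proof -
  interpret ups U M d z using assms by unfold_locales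
  have c1: "\<forall>\<phi>\<in>free (uprod U M d z) (uprod_dist U d) (uprod_base U M d z). Tm \<phi> \<in> linfF M d z"
    using P1 by blast
  have c2: "\<forall>\<phi>\<in>free (uprod U M d z) (uprod_dist U d) (uprod_base U M d z).
     \<forall>\<psi>\<in>free (uprod U M d z) (uprod_dist U d) (uprod_base U M d z). \<forall>a b.
        unorm U M d z (\<lambda>i f. Tm (\<lambda>g. a * \<phi> g + b * \<psi> g) i f - (a * Tm \<phi> i f + b * Tm \<psi> i f)) = 0"
    using P2 by blast
  have c3: "\<forall>\<phi>\<in>free (uprod U M d z) (uprod_dist U d) (uprod_base U M d z).
        unorm U M d z (Tm \<phi>) = dnorm (uprod U M d z) (uprod_dist U d) (uprod_base U M d z) \<phi>"
    using P3 by blast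
  have c4: "\<forall>\<Phi>\<in>linfF M d z. \<Phi> \<in> udelta_span_closure U M d z \<longleftrightarrow>
       (\<exists>\<phi>\<in>free (uprod U M d z) (uprod_dist U d) (uprod_base U M d z).
          unorm U M d z (\<lambda>i f. \<Phi> i f - Tm \<phi> i f) = 0)"
  proof (intro ballI iffI)
    fix \<Phi> assume "\<Phi> \<in> udelta_span_closure U M d z"
    then show "\<exists>\<phi>\<in>free (uprod U M d z) (uprod_dist U d) (uprod_base U M d z).
          unorm U M d z (\<lambda>i f. \<Phi> i f - Tm \<phi> i f) = 0" by (rule P4b)
  next
    fix \<Phi> assume \<Phi>: "\<Phi> \<in> linfF M d z" and
      "\<exists>\<phi>\<in>free (uprod U M d z) (uprod_dist U d) (uprod_base U M d z).
          unorm U M d z (\<lambda>i f. \<Phi> i f - Tm \<phi> i f) = 0"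
    then obtain \<phi> where "\<phi> \<in> free (uprod U M d z) (uprod_dist U d) (uprod_base U M d z)"
      "unorm U M d z (\<lambda>i f. \<Phi> i f - Tm \<phi> i f) = 0" by blast
    then show "\<Phi> \<in> udelta_span_closure U M d z" by (rule P4a[OF \<Phi>])
  qed
  show ?thesis by (rule exI[of _ Tm]) (intro conjI c1 c2 c3 c4)
qed

end
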